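(* Let $\psi$, $\Psi$, $I$, $I_j(\theta)$ and $F_{i,\theta}(\varepsilon,\boldsymbol\alpha)$ be as in the context, and assume the right-tail condition: for every $\varepsilon>0$ and all $\theta,\vartheta\in\Theta$, $\theta\neq\vartheta$, $$\lim_{L\to\infty}\mathsf P_\theta\Big\{\frac{1}{\psi(L)}\max_{1\le n\le L}\lambda_{\theta,\vartheta}(n)>(1+\varepsilon)I(\theta,\vartheta)\Big\}=0 .$$ Then for every $0<\varepsilon<1$: $$\lim_{\alpha_{\max}\to0}\ \inf_{D\in\mathbb C(\boldsymbol\alpha)}\mathsf P_\theta\{T>F_{i,\theta}(\varepsilon,\boldsymbol\alpha)\}=1\quad\text{for all }\theta\in\Theta_i,\ i\in\mathcal N_0,$$ $$\lim_{\alpha_{\max}\to0}\ \inf_{D\in\mathbb C(\boldsymbol\alpha)}\mathsf P_\theta\Big\{T>\min_{0\le i\le N}F_{i,\theta}(\varepsilon,\boldsymbol\alpha)\Big\}=1\quad\text{for all }\theta\in\Theta_{\rm in}.$$ Consequently, for all $r\ge1$, as $\alpha_{\max}\to0$, $$\inf_{D\in\mathbb C(\boldsymbol\alpha)}\mathsf E_\theta[T^r]\ge [F_{i,\theta}(\boldsymbol\alpha)]^r(1+o(1))\quad\text{for all }\theta\in\Theta_i,\ i\in\mathcal N_0,$$ $$\inf_{D\in\mathbb C(\boldsymbol\alpha)}\mathsf E_\theta[T^r]\ge \Big[\min_{i\in\mathcal N_0}F_{i,\theta}(\boldsymbol\alpha)\Big]^r(1+o(1))\quad\text{for all }\theta\in\Theta_{\rm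 in}.$$ (Here $T$ denotes the stopping time of the test $D=(T,d)$.)
   Context: Observations $X_1,X_2,\dots$ are defined on a measurable space with a family of probability measures $\{\mathsf P_\theta,\theta\in\Theta\}$, $\Theta\subseteq\mathbb R^l$; $\mathcal F_n=\sigma(X_1,\dots,X_n)$, $\mathbf X_1^n=(X_1,\dots,X_n)$. The restriction $\mathsf P_\theta^n$ of $\mathsf P_\theta$ to $\mathcal F_n$ has density $p_{\theta,n}(\mathbf X_1^n)=\prod_{t=1}^n f_{\theta,t}(X_t\mid\mathbf X_1^{t-1})$ with respect to a $\sigma$-finite measure, and $\mathsf P^n_\theta,\mathsf P^n_\vartheta$ are mutually absolutely continuous for all $n\ge1$ and $\theta,\vartheta\in\Theta$. $\mathsf E_\theta$ is expectation under $\mathsf P_\theta$. The log-likelihood ratio is $\lambda_{\theta,\vartheta}(n)=\log[p_{\theta,n}(\mathbf X_1^n)/p_{\vartheta,n}(\mathbf X_1^n)]$. $\Theta$ is the disjoint union of $\Theta_0,\Theta_1,\dots,\Theta_N$ ($N\ge1$) and an indifference zone $\Theta_{\rm in}$ (possibly empty); hypothesis $H_i$ is $\theta\in\Theta_i$; $\mathcal N_0=\{0,1,\dots,N\}$. A (multi-hypothesis sequential) test $D=(T,d)$ consists of a stopping time $T$ w.r.t. $(\mathcal F_n)$ and an $\mathcal F_T$-measurable terminal decision $d\in\mathcal N_0$; $\{d=i\}$ means $T<\infty$ and $H_i$ is accepted. For a matrix $\boldsymbol\alpha=(\alpha_{ij})_{i\ne j}$ with $\alpha_{ij}\in(0,1)$,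 $\mathbb C(\boldsymbol\alpha)=\{D:\sup_{\theta\in\Theta_i}\mathsf P_\theta(d=j)\le\alpha_{ij}\ \forall i\ne j\}$ and $\alpha_{\max}=\max_{i\ne j}\alpha_{ij}$. Limits as $\alpha_{\max}\to0$ are taken along families of matrices for which $|\log\alpha_{ij}|/|\log\alpha_{\max}|\to c_{ij}\in(0,1]$ for all $i\ne j$. The function $\psi:\mathbb R_+\to\mathbb R_+$ is increasing and one-to-one with $\psi(t)\to\infty$; $\Psi=\psi^{-1}$, $\Psi(t)\to\infty$, and $\lim_{\delta\to1}\lim_{t\to\infty}\Psi(\delta t)/\Psi(t)=1$. The function $I(\theta,\vartheta)$ ($\theta\ne\vartheta$) is positive and continuous and satisfies the separability conditions: $\min_{j\ne i}\inf_{\vartheta\in\Theta_j}I(\theta,\vartheta)>0$ for all $\theta\in\Theta_i$, $i\in\mathcal N_0$, and $\min_{i\in\mathcal N_0}\inf_{\vartheta\in\Theta_i}I(\theta,\vartheta)>0$ for all $\theta\in\Theta_{\rm in}$. Write $I_j(\theta)=\inf_{\vartheta\in\Theta_j}I(\theta,\vartheta)$, $F_{i,\theta}(\varepsilon,\boldsymbol\alpha)=\Psi\big((1-\varepsilon)\max_{j\in\mathcal N_0\setminus i}|\log\alpha_{ji}|/I_j(\theta)\big)$ and $F_{i,\theta}(\boldsymbol\alpha)=F_{i,\theta}(0,\boldsymbol\alpha)$. *)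

theory Defs
  imports "HOL-Probability.Probability"
begin

definition obs_vec :: "(nat \<Rightarrow> 'w \<Rightarrow> 'x) \<Rightarrow> nat \<Rightarrow> 'w \<Rightarrow> (nat \<Rightarrow> 'x)" where
  "obs_vec X n \<omega> = (\<lambda>i\<in>{1..n}. X i \<omega>)"

definition obs_filt :: "'w measure \<Rightarrow> 'x measure \<Rightarrow> (nat \<Rightarrow> 'w \<Rightarrow> 'x) \<Rightarrow> nat \<Rightarrow> 'w measure" where
  "obs_filt \<Omega> S X n =
     sigma (space \<Omega>) {X i -` A \<inter> space \<Omega> | i A. i \<in> {1..n} \<and> A \<in> sets S}"

definition llr :: "('p \<Rightarrow> nat \<Rightarrow> (nat \<Rightarrow> 'x) \<Rightarrow> real) \<Rightarrow> (nat \<Rightarrow> 'w \<Rightarrow> 'x)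
    \<Rightarrow> 'p \<Rightarrow> 'p \<Rightarrow> nat \<Rightarrow> 'w \<Rightarrow> real" where
  "llr p X \<theta> \<theta>' n \<omega> = ln (p \<theta> n (obs_vec X n \<omega>) / p \<theta>' n (obs_vec X n \<omega>))"

text \<open>A multi-hypothesis sequential test (T,d): T is a stopping time (possibly infinite)
  w.r.t. F_n, d is F_T-measurable with values in {0..N}; d is only meaningful on {T < infinity}.\<close>
definition is_test :: "'w measure \<Rightarrow> 'x measure \<Rightarrow> (nat \<Rightarrow> 'w \<Rightarrow> 'x) \<Rightarrow> nat
    \<Rightarrow> ('w \<Rightarrow> enat) \<Rightarrow> ('w \<Rightarrow> nat) \<Rightarrow> bool" where
  "is_test \<Omega> S X N T d \<longleftrightarrow>
     (\<forall>n. {\<omega>\<in>space \<Omega>. T \<omega> \<le> enat n} \<in> sets (obs_filt \<Omega> S X n)) \<and>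
     (\<forall>n j. {\<omega>\<in>space \<Omega>. T \<omega> = enat n \<and> d \<omega> = j} \<in> sets (obs_filt \<Omega> S X n)) \<and>
     (\<forall>\<omega>\<in>space \<Omega>. T \<omega> \<noteq> \<infinity> \<longrightarrow> d \<omega> \<le> N)"

definition accept_event :: "'w measure \<Rightarrow> ('w \<Rightarrow> enat) \<Rightarrow> ('w \<Rightarrow> nat) \<Rightarrow> nat \<Rightarrow> 'w set" where
  "accept_event \<Omega> T d j = {\<omega>\<in>space \<Omega>. T \<omega> \<noteq> \<infinity> \<and> d \<omega> = j}"

definition test_class :: "'w measure \<Rightarrow> 'x measure \<Rightarrow> (nat \<Rightarrow> 'w \<Rightarrow> 'x) \<Rightarrow> nat
    \<Rightarrow> (nat \<Rightarrow> 'p set) \<Rightarrow> ('p \<Rightarrow> 'w measure) \<Rightarrow> (nat \<Rightarrow> nat \<Rightarrow> real)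
    \<Rightarrow> (('w \<Rightarrow> enat) \<times> ('w \<Rightarrow> nat)) set" where
  "test_class \<Omega> S X N \<Theta> P \<alpha> =
     {(T, d). is_test \<Omega> S X N T d \<and>
        (\<forall>i\<le>N. \<forall>j\<le>N. i \<noteq> j \<longrightarrow>
           (\<forall>\<theta>\<in>\<Theta> i. measure (P \<theta>) (accept_event \<Omega> T d j) \<le> \<alpha> i j))}"

definition alpha_max :: "nat \<Rightarrow> (nat \<Rightarrow> nat \<Rightarrow> real) \<Rightarrow> real" where
  "alpha_max N \<alpha> = Max {\<alpha> i j | i j. i \<le> N \<and> j \<le> N \<and> i \<noteq> j}"

definition Ij :: "('p \<Rightarrow> 'p \<Rightarrow> real) \<Rightarrow> (nat \<Rightarrow> 'p set) \<Rightarrow> nat \<Rightarrow> 'p \<Rightarrow> real" where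
  "Ij I \<Theta> j \<theta> = (INF \<theta>'\<in>\<Theta> j. I \<theta> \<theta>')"

definition Fbound :: "(real \<Rightarrow> real) \<Rightarrow> ('p \<Rightarrow> 'p \<Rightarrow> real) \<Rightarrow> (nat \<Rightarrow> 'p set) \<Rightarrow> nat
    \<Rightarrow> nat \<Rightarrow> 'p \<Rightarrow> real \<Rightarrow> (nat \<Rightarrow> nat \<Rightarrow> real) \<Rightarrow> real" where
  "Fbound \<Psi> I \<Theta> N i \<theta> \<epsilon> \<alpha> =
     \<Psi> ((1 - \<epsilon>) * Max ((\<lambda>j. \<bar>ln (\<alpha> j i)\<bar> / Ij I \<Theta> j \<theta>) ` ({0..N} - {i})))"

definition T_gt :: "('w \<Rightarrow> enat) \<Rightarrow> real \<Rightarrow> 'w \<Rightarrow> bool" where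
  "T_gt T x \<omega> = (case T \<omega> of enat n \<Rightarrow> x < real n | \<infinity> \<Rightarrow> True)"

definition T_moment :: "'w measure \<Rightarrow> ('w \<Rightarrow> enat) \<Rightarrow> real \<Rightarrow> ennreal" where
  "T_moment M T r = (\<integral>\<^sup>+ \<omega>. (case T \<omega> of enat n \<Rightarrow> ennreal (real n powr r) | \<infinity> \<Rightarrow> \<infinity>) \<partial>M)"

end

theory Submission
  imports Defs
begin


lemma obs_vec_meas:
  assumes "\<forall>i. X i \<in> measurable \<Omega> S"
  shows "obs_vec X n \<in> measurable \<Omega> (PiM {1..n} (\<lambda>_. S))"
  unfolding obs_vec_def[abs_def] using assms by (intro measurable_restrict) auto

lemma obs_filt_sets:
  "sets (obs_filt \<Omega> S X n) = sigma_sets (space \<Omega>) {X i -` A \<inter> space \<Omega> | i A. i \<in> {1..n} \<and> A \<in> sets S}"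
  unfolding obs_filt_def by (rule sets_measure_of) auto

lemma obs_filt_vimage:
  assumes Xm: "\<forall>i. X i \<in> measurable \<Omega> S" and A: "A \<in> sets (obs_filt \<Omega> S X n)"
  shows "\<exists>B\<in>sets (PiM {1..n} (\<lambda>_. S)). A = obs_vec X n -` B \<inter> space \<Omega>"
proof -
  let ?V = "vimage_algebra (space \<Omega>) (obs_vec X n) (PiM {1..n} (\<lambda>_. S))"
  have om: "obs_vec X n \<in> space \<Omega> \<rightarrow> space (PiM {1..n} (\<lambda>_. S))"
    using measurable_space[OF obs_vec_meas[OF Xm]] by (auto simp: Pi_iff)
  have sV: "sets ?V = {obs_vec X n -` B \<inter> space \<Omega> | B. B \<in> sets (PiM {1..n} (\<lambda>_. S))}"
    by (rule sets_vimage_algebra2[OF om])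
  have gen: "{X i -` A \<inter> space \<Omega> | i A. i \<in> {1..n} \<and> A \<in> sets S} \<subseteq> sets ?V"
  proof
    fix x assume "x \<in> {X i -` A \<inter> space \<Omega> | i A. i \<in> {1..n} \<and> A \<in> sets S}"
    then obtain i A' where x: "x = X i -` A' \<inter> space \<Omega>" "i \<in> {1..n}" "A' \<in> sets S" by blast
    let ?B = "{y\<in>space (PiM {1..n} (\<lambda>_. S)). y i \<in> A'}"
    have "?B \<in> sets (PiM {1..n} (\<lambda>_. S))"
      using x by (intro sets_Collect_single) auto
    moreover have "x = obs_vec X n -` ?B \<inter> space \<Omega>"
      using x om by (auto simp: obs_vec_def Pi_iff)
    ultimately show "x \<in> sets ?V" unfolding sV by blast
  qed
  have "sigma_sets (space \<Omega>) {X i -` A \<inter> space \<Omega> | i A. i \<in> {1..n} \<and> A \<in> sets S} \<subseteq> sets ?V"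
  proof -
    have sa: "sigma_algebra (space \<Omega>) (sets ?V)"
      using sets.sigma_algebra_axioms[of ?V] unfolding space_vimage_algebra .
    show ?thesis using sigma_algebra.sigma_sets_subset[OF sa gen] .
  qed
  with A show ?thesis unfolding obs_filt_sets sV by blast
qed

lemma obs_filt_0:
  assumes "A \<in> sets (obs_filt \<Omega> S X 0)" shows "A = {} \<or> A = space \<Omega>"
  using assms unfolding obs_filt_sets by (simp add: sigma_sets_empty_eq)




lemma change_measure:
  fixes \<Omega> :: "'w measure" and S :: "'x measure"
  assumes Xm: "\<forall>i. X i \<in> measurable \<Omega> S"
    and Pt: "prob_space Pt" "sets Pt = sets \<Omega>"
    and Pv: "prob_space Pv" "sets Pv = sets \<Omega>"
    and mu: "sets mu = sets (PiM {1..n} (\<lambda>_. S))"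
    and ft: "\<forall>x. 0 \<le> ft x" "ft \<in> borel_measurable (PiM {1..n} (\<lambda>_. S))"
            "distr Pt (PiM {1..n} (\<lambda>_. S)) (obs_vec X n) = density mu (\<lambda>x. ennreal (ft x))"
    and fv: "\<forall>x. 0 \<le> fv x" "fv \<in> borel_measurable (PiM {1..n} (\<lambda>_. S))"
            "distr Pv (PiM {1..n} (\<lambda>_. S)) (obs_vec X n) = density mu (\<lambda>x. ennreal (fv x))"
    and ac: "absolutely_continuous (distr Pv (PiM {1..n} (\<lambda>_. S)) (obs_vec X n))
                                   (distr Pt (PiM {1..n} (\<lambda>_. S)) (obs_vec X n))"
    and A: "A \<in> sets (obs_filt \<Omega> S X n)"
  shows "measure Pt (A \<inter> {\<omega>\<in>space \<Omega>. ln (ft (obs_vec X n \<omega>) / fv (obs_vec X n \<omega>)) \<le> a})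
           \<le> exp a * measure Pv A"
proof -
  define PI where "PI = PiM {1..n} (\<lambda>_. S)"
  define ov where "ov = obs_vec X n"
  have ovm: "ov \<in> measurable \<Omega> PI" unfolding ov_def PI_def by (rule obs_vec_meas[OF Xm])
  have ovt: "ov \<in> measurable Pt PI" using ovm measurable_cong_sets[OF Pt(2) refl] by blast
  have ovv: "ov \<in> measurable Pv PI" using ovm measurable_cong_sets[OF Pv(2) refl] by blast
  have spt: "space Pt = space \<Omega>" using Pt(2) sets_eq_imp_space_eq by blast
  have spv: "space Pv = space \<Omega>" using Pv(2) sets_eq_imp_space_eq by blast
  have spmu: "space mu = space PI" using mu sets_eq_imp_space_eq unfolding PI_def by blast
  obtain B where B: "B \<in> sets PI" "A = ov -` B \<inter> space \<Omega>"
    using obs_filt_vimage[OF Xm A] unfolding PI_def ov_def by blast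
  define D where "D = {x\<in>space PI. ln (ft x / fv x) \<le> a}"
  have Dm: "D \<in> sets PI" unfolding D_def using ft(2) fv(2) unfolding PI_def by measurable
  define Z where "Z = {x\<in>space PI. fv x = 0}"
  have Zm: "Z \<in> sets PI" unfolding Z_def using fv(2) unfolding PI_def by measurable
  have ftm0: "ft \<in> borel_measurable mu"
    by (subst measurable_cong_sets[OF mu refl]) (rule ft(2))
  have fvm0: "fv \<in> borel_measurable mu"
    by (subst measurable_cong_sets[OF mu refl]) (rule fv(2))
  have ftm: "(\<lambda>x. ennreal (ft x)) \<in> borel_measurable mu" using ftm0 by measurable
  have fvm: "(\<lambda>x. ennreal (fv x)) \<in> borel_measurable mu" using fvm0 by measurable
  have eq1: "A \<inter> {\<omega>\<in>space \<Omega>. ln (ft (obs_vec X n \<omega>) / fv (obs_vec X n \<omega>)) \<le> a}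
      = ov -` (B \<inter> D) \<inter> space Pt"
    using B(2) measurable_space[OF ovm] unfolding D_def ov_def spt by auto
  have "measure Pt (ov -` (B \<inter> D) \<inter> space Pt) = measure (distr Pt PI ov) (B \<inter> D)"
    using measure_distr[OF ovt] B(1) Dm by auto
  also have "\<dots> = enn2real (emeasure (density mu (\<lambda>x. ennreal (ft x))) (B \<inter> D))"
    using ft(3) unfolding PI_def ov_def measure_def by simp
  finally have e1: "measure Pt (ov -` (B \<inter> D) \<inter> space Pt)
      = enn2real (emeasure (density mu (\<lambda>x. ennreal (ft x))) (B \<inter> D))" .
  have "measure Pv A = measure (distr Pv PI ov) B"
    using measure_distr[OF ovv] B spv by auto
  also have "\<dots> = enn2real (emeasure (density mu (\<lambda>x. ennreal (fv x))) B)"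
    using fv(3) unfolding PI_def ov_def measure_def by simp
  finally have e2: "measure Pv A = enn2real (emeasure (density mu (\<lambda>x. ennreal (fv x))) B)" .
  have BDmu: "B \<inter> D \<in> sets mu" "B \<in> sets mu" "Z \<in> sets mu" using B(1) Dm Zm mu unfolding PI_def by auto
  have Zv: "emeasure (distr Pv PI ov) Z = 0"
  proof -
    have "emeasure (distr Pv PI ov) Z = (\<integral>\<^sup>+ x. ennreal (fv x) * indicator Z x \<partial>mu)"
      using fv(3) emeasure_density[OF fvm BDmu(3)] unfolding PI_def ov_def by simp
    also have "\<dots> = (\<integral>\<^sup>+ x. 0 \<partial>mu)"
      by (intro nn_integral_cong) (auto simp: Z_def indicator_def)
    finally show ?thesis by simp
  qed
  have "Z \<in> null_sets (distr Pv PI ov)" using Zv Zm by auto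
  hence "Z \<in> null_sets (distr Pt PI ov)" using ac unfolding absolutely_continuous_def PI_def ov_def by auto
  hence Zt: "(\<integral>\<^sup>+ x. ennreal (ft x) * indicator Z x \<partial>mu) = 0"
    using ft(3) emeasure_density[OF ftm BDmu(3)] unfolding PI_def ov_def by auto
  have "emeasure (density mu (\<lambda>x. ennreal (ft x))) (B \<inter> D)
      = (\<integral>\<^sup>+ x. ennreal (ft x) * indicator (B \<inter> D) x \<partial>mu)"
    by (rule emeasure_density[OF ftm BDmu(1)])
  also have "\<dots> \<le> (\<integral>\<^sup>+ x. ennreal (exp a) * (ennreal (fv x) * indicator B x)
                          + ennreal (ft x) * indicator Z x \<partial>mu)"
  proof (rule nn_integral_mono)
    fix x assume x: "x \<in> space mu"
    show "ennreal (ft x) * indicator (B \<inter> D) x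
        \<le> ennreal (exp a) * (ennreal (fv x) * indicator B x) + ennreal (ft x) * indicator Z x"
    proof (cases "x \<in> B \<inter> D")
      case False
      hence "indicator (B \<inter> D) x = (0::ennreal)" by simp
      thus ?thesis by simp
    next
      case True
      show ?thesis
      proof (cases "fv x = 0")
        case True
        with x spmu have "x \<in> Z" unfolding Z_def by auto
        thus ?thesis by (simp add: indicator_def)
      next
        case fv0: False
        have fvp: "fv x > 0" using fv(1) fv0 by (metis less_eq_real_def)
        have "ft x \<le> exp a * fv x"
        proof (cases "ft x = 0")
          case True thus ?thesis using fvp by simp
        next
          case False
          hence ftp: "ft x > 0" using ft(1) by (metis less_eq_real_def)
          have "ln (ft x / fv x) \<le> a" using True unfolding D_def by auto
          hence "ft x / fv x \<le> exp a" using ftp fvp by (metis divide_pos_pos exp_le_cancel_iff exp_ln)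
          thus ?thesis using fvp by (simp add: divide_le_eq mult.commute)
        qed
        hence "ennreal (ft x) \<le> ennreal (exp a) * ennreal (fv x)"
          using fvp by (metis ennreal_leI ennreal_mult exp_ge_zero less_imp_le)
        thus ?thesis using True by (simp add: indicator_def add_increasing2)
      qed
    qed
  qed
  also have "\<dots> = ennreal (exp a) * (\<integral>\<^sup>+ x. ennreal (fv x) * indicator B x \<partial>mu)
                  + (\<integral>\<^sup>+ x. ennreal (ft x) * indicator Z x \<partial>mu)"
    using BDmu fvm ftm by (simp add: nn_integral_add nn_integral_cmult)
  also have "\<dots> = ennreal (exp a) * emeasure (density mu (\<lambda>x. ennreal (fv x))) B"
    using Zt emeasure_density[OF fvm BDmu(2)] by simp
  finally have le: "emeasure (density mu (\<lambda>x. ennreal (ft x))) (B \<inter> D)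
      \<le> ennreal (exp a) * emeasure (density mu (\<lambda>x. ennreal (fv x))) B" .
  have fin: "emeasure (density mu (\<lambda>x. ennreal (fv x))) B < top"
  proof -
    interpret pv: prob_space Pv by (rule Pv(1))
    interpret d: prob_space "distr Pv PI ov" using ovv by (rule pv.prob_space_distr)
    show ?thesis using fv(3) d.emeasure_finite unfolding PI_def ov_def
      by (simp add: top.not_eq_extremum)
  qed
  have "enn2real (emeasure (density mu (\<lambda>x. ennreal (ft x))) (B \<inter> D))
      \<le> enn2real (ennreal (exp a) * emeasure (density mu (\<lambda>x. ennreal (fv x))) B)"
    using le fin by (intro enn2real_mono) (auto simp: ennreal_mult_less_top)
  also have "\<dots> = exp a * enn2real (emeasure (density mu (\<lambda>x. ennreal (fv x))) B)"
    by (simp add: enn2real_mult)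
  finally show ?thesis using eq1 e1 e2 by simp
qed




lemma obs_filt_sets_sub:
  assumes Xm: "\<forall>i. X i \<in> measurable \<Omega> S" and A: "A \<in> sets (obs_filt \<Omega> S X n)"
  shows "A \<in> sets \<Omega>"
  using obs_filt_vimage[OF Xm A] obs_vec_meas[OF Xm, of n] by (auto intro: measurable_sets)

lemma llr_meas:
  assumes Xm: "\<forall>i. X i \<in> measurable \<Omega> S"
    and "p t n \<in> borel_measurable (PiM {1..n} (\<lambda>_. S))" "p v n \<in> borel_measurable (PiM {1..n} (\<lambda>_. S))"
  shows "llr p X t v n \<in> borel_measurable \<Omega>"
proof -
  have "(\<lambda>\<omega>. p t n (obs_vec X n \<omega>)) \<in> borel_measurable \<Omega>"
    using measurable_comp[OF obs_vec_meas[OF Xm] assms(2)] by (simp add: comp_def)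
  moreover have "(\<lambda>\<omega>. p v n (obs_vec X n \<omega>)) \<in> borel_measurable \<Omega>"
    using measurable_comp[OF obs_vec_meas[OF Xm] assms(3)] by (simp add: comp_def)
  ultimately show ?thesis unfolding llr_def[abs_def] by measurable
qed

lemma enat_le_iff: "x \<le> enat L \<longleftrightarrow> (\<exists>m\<le>L. x = enat m)"
  by (cases x) auto

lemma test_bound:
  fixes \<Omega> :: "'w measure" and S :: "'x measure"
  assumes Xm: "\<forall>i. X i \<in> measurable \<Omega> S"
    and Pt: "prob_space Pt" "sets Pt = sets \<Omega>"
    and Pv: "prob_space Pv" "sets Pv = sets \<Omega>"
    and mu: "\<forall>n\<ge>1. sets (mu n) = sets (PiM {1..n} (\<lambda>_. S))"
    and dt: "\<forall>n\<ge>1. (\<forall>x. 0 \<le> p t n x) \<and> p t n \<in> borel_measurable (PiM {1..n} (\<lambda>_. S))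
              \<and> distr Pt (PiM {1..n} (\<lambda>_. S)) (obs_vec X n) = density (mu n) (\<lambda>x. ennreal (p t n x))"
    and dv: "\<forall>n\<ge>1. (\<forall>x. 0 \<le> p v n x) \<and> p v n \<in> borel_measurable (PiM {1..n} (\<lambda>_. S))
              \<and> distr Pv (PiM {1..n} (\<lambda>_. S)) (obs_vec X n) = density (mu n) (\<lambda>x. ennreal (p v n x))"
    and ac: "\<forall>n\<ge>1. absolutely_continuous (distr Pv (PiM {1..n} (\<lambda>_. S)) (obs_vec X n))
                                   (distr Pt (PiM {1..n} (\<lambda>_. S)) (obs_vec X n))"
    and test: "is_test \<Omega> S X N T d"
    and L: "L \<ge> 1" and a: "a \<ge> 0"
  shows "measure Pt {\<omega>\<in>space \<Omega>. T \<omega> \<le> enat L \<and> d \<omega> = i}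
    \<le> exp a * measure Pv (accept_event \<Omega> T d i)
       + measure Pt {\<omega>\<in>space \<Omega>. a < Max ((\<lambda>n. llr p X t v n \<omega>) ` {1..L})}"
proof -
  interpret pt: prob_space Pt by (rule Pt(1))
  interpret pv: prob_space Pv by (rule Pv(1))
  have spt: "space Pt = space \<Omega>" using Pt(2) sets_eq_imp_space_eq by blast
  have spv: "space Pv = space \<Omega>" using Pv(2) sets_eq_imp_space_eq by blast
  have llrm: "llr p X t v n \<in> borel_measurable \<Omega>" if n1: "n \<ge> 1" for n
    using llr_meas[where p=p and t=t and v=v and n=n, OF Xm conjunct1[OF conjunct2[OF dt[rule_format, OF n1]]]
                         conjunct1[OF conjunct2[OF dv[rule_format, OF n1]]]] .
  define K where "K n = {\<omega>\<in>space \<Omega>. T \<omega> = enat n \<and> d \<omega> = i}" for n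
  have KF: "K n \<in> sets (obs_filt \<Omega> S X n)" for n
    using test unfolding is_test_def K_def by blast
  have Km: "K n \<in> sets \<Omega>" for n using obs_filt_sets_sub[OF Xm KF] .
  define Lset where "Lset n = {\<omega>\<in>space \<Omega>. llr p X t v n \<omega> \<le> a}" for n
  have Lm: "Lset n \<in> sets \<Omega>" if "n \<ge> 1" for n
    unfolding Lset_def using llrm[OF that] by measurable
  define C where "C n = (if n = 0 then K 0 else K n \<inter> Lset n)" for n
  have Cm: "C n \<in> sets \<Omega>" for n unfolding C_def using Km Lm by auto
  define E where "E = {\<omega>\<in>space \<Omega>. T \<omega> \<le> enat L \<and> d \<omega> = i}"
  define G where "G = {\<omega>\<in>space \<Omega>. a < Max ((\<lambda>n. llr p X t v n \<omega>) ` {1..L})}"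
  have Geq: "G = (\<Union>n\<in>{1..L}. {\<omega>\<in>space \<Omega>. a < llr p X t v n \<omega>})"
    unfolding G_def using L by (auto simp: Max_gr_iff)
  have Gm: "G \<in> sets \<Omega>" unfolding Geq
  proof (intro sets.finite_UN)
    fix n assume "n \<in> {1..L}"
    hence "llr p X t v n \<in> borel_measurable \<Omega>" using llrm by auto
    thus "{\<omega>\<in>space \<Omega>. a < llr p X t v n \<omega>} \<in> sets \<Omega>" by measurable
  qed auto
  have Em: "E \<in> sets \<Omega>"
  proof -
    have "E = (\<Union>n\<in>{0..L}. K n)" unfolding E_def K_def using enat_le_iff by auto
    thus ?thesis using Km by auto
  qed
  have sub: "E - G \<subseteq> (\<Union>n\<in>{0..L}. C n)"
  proof
    fix \<omega> assume w: "\<omega> \<in> E - G"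
    then obtain m where m: "T \<omega> = enat m" "m \<le> L" "d \<omega> = i" "\<omega> \<in> space \<Omega>"
      unfolding E_def using enat_le_iff by auto
    have "\<forall>n\<in>{1..L}. llr p X t v n \<omega> \<le> a" using w m(4) unfolding Geq by auto
    thus "\<omega> \<in> (\<Union>n\<in>{0..L}. C n)" using m
      by (intro UN_I[of m]) (auto simp: C_def K_def Lset_def)
  qed
  have Ct: "measure Pt (C n) \<le> exp a * measure Pv (K n)" for n
  proof (cases "n = 0")
    case True
    have "K 0 = {} \<or> K 0 = space \<Omega>" using obs_filt_0[OF KF[of 0]] .
    thus ?thesis
    proof
      assume "K 0 = {}" thus ?thesis using True by (simp add: C_def)
    next
      assume k: "K 0 = space \<Omega>"
      have "measure Pt (C n) = 1" using True k spt pt.prob_space by (simp add: C_def)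
      moreover have "measure Pv (K n) = 1" using True k spv pv.prob_space by simp
      ultimately show ?thesis using a by simp
    qed
  next
    case False
    hence n1: "n \<ge> 1" by simp
    have "measure Pt (K n \<inter> {\<omega>\<in>space \<Omega>. ln (p t n (obs_vec X n \<omega>) / p v n (obs_vec X n \<omega>)) \<le> a})
           \<le> exp a * measure Pv (K n)"
      using change_measure[OF Xm Pt Pv, of "mu n" n "p t n" "p v n" "K n" a] mu dt dv ac n1 KF[of n]
      by auto
    moreover have "C n = K n \<inter> {\<omega>\<in>space \<Omega>. ln (p t n (obs_vec X n \<omega>) / p v n (obs_vec X n \<omega>)) \<le> a}"
      using False unfolding C_def Lset_def llr_def by auto
    ultimately show ?thesis by simp
  qed
  have "measure Pt E \<le> measure Pt ((E - G) \<union> G)"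
    using Em Gm Pt(2) by (intro pt.finite_measure_mono) auto
  also have "\<dots> \<le> measure Pt (E - G) + measure Pt G"
    using Em Gm Pt(2) by (intro measure_Un_le) auto
  also have "measure Pt (E - G) \<le> measure Pt (\<Union>n\<in>{0..L}. C n)"
    using sub Cm Pt(2) by (intro pt.finite_measure_mono) auto
  also have "\<dots> \<le> (\<Sum>n\<in>{0..L}. measure Pt (C n))"
    using Cm Pt(2) by (intro measure_UNION_le) auto
  also have "\<dots> \<le> (\<Sum>n\<in>{0..L}. exp a * measure Pv (K n))"
    by (intro sum_mono Ct)
  also have "\<dots> = exp a * measure Pv (\<Union>n\<in>{0..L}. K n)"
    using Km Pv(2) by (subst pv.finite_measure_finite_Union)
      (auto simp: sum_distrib_left disjoint_family_on_def K_def)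
  also have "\<dots> \<le> exp a * measure Pv (accept_event \<Omega> T d i)"
  proof -
    have "(\<Union>n\<in>{0..L}. K n) \<subseteq> accept_event \<Omega> T d i" unfolding K_def accept_event_def by auto
    moreover have "accept_event \<Omega> T d i \<in> sets Pv"
    proof -
      have "accept_event \<Omega> T d i = (\<Union>n. K n)" unfolding accept_event_def K_def by auto
      thus ?thesis using Km Pv(2) by auto
    qed
    ultimately show ?thesis by (intro mult_left_mono pv.finite_measure_mono) auto
  qed
  finally show ?thesis unfolding E_def G_def by simp
qed




lemma nat_floor_le: "0 \<le> (x::real) \<Longrightarrow> real (nat \<lfloor>x\<rfloor>) \<le> x"
  by (metis of_int_floor_le of_nat_nat zero_le_floor)

locale setting =
  fixes \<Omega> :: "'w measure" and S :: "'x measure" and X :: "nat \<Rightarrow> 'w \<Rightarrow> 'x"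
    and P :: "'p \<Rightarrow> 'w measure"
    and N :: nat and \<Theta> :: "nat \<Rightarrow> 'p set" and \<Theta>in :: "'p set"
    and \<mu> :: "nat \<Rightarrow> (nat \<Rightarrow> 'x) measure" and p :: "'p \<Rightarrow> nat \<Rightarrow> (nat \<Rightarrow> 'x) \<Rightarrow> real"
    and \<psi> :: "real \<Rightarrow> real" and I :: "'p \<Rightarrow> 'p \<Rightarrow> real"
    and \<alpha> :: "nat \<Rightarrow> nat \<Rightarrow> nat \<Rightarrow> real"
    and \<Theta>all :: "'p set" and \<Psi> :: "real \<Rightarrow> real"
  assumes Theta_all_def: "\<Theta>all = \<Theta>in \<union> (\<Union>i\<in>{0..N}. \<Theta> i)"
    and Psi_def: "\<Psi> = inv_into {0..} \<psi>"
    and Theta_disj: "disjoint_family_on \<Theta> {0..N}"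
    and Theta_in_disj: "\<forall>i\<le>N. \<Theta>in \<inter> \<Theta> i = {}"
    and Theta_ne: "\<forall>i\<le>N. \<Theta> i \<noteq> {}"
    and X_meas: "\<forall>i. X i \<in> measurable \<Omega> S"
    and P_prob: "\<forall>\<theta>\<in>\<Theta>all. prob_space (P \<theta>) \<and> sets (P \<theta>) = sets \<Omega>"
    and mu_sf: "\<forall>n\<ge>1. sets (\<mu> n) = sets (PiM {1..n} (\<lambda>_. S)) \<and> sigma_finite_measure (\<mu> n)"
    and dens: "\<forall>\<theta>\<in>\<Theta>all. \<forall>n\<ge>1. (\<forall>x. 0 \<le> p \<theta> n x)
                 \<and> p \<theta> n \<in> borel_measurable (PiM {1..n} (\<lambda>_. S))
                 \<and> distr (P \<theta>) (PiM {1..n} (\<lambda>_. S)) (obs_vec X n)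
                     = density (\<mu> n) (\<lambda>x. ennreal (p \<theta> n x))"
    and mut_ac: "\<forall>\<theta>\<in>\<Theta>all. \<forall>\<theta>'\<in>\<Theta>all. \<forall>n\<ge>1.
                 absolutely_continuous (distr (P \<theta>) (PiM {1..n} (\<lambda>_. S)) (obs_vec X n))
                                       (distr (P \<theta>') (PiM {1..n} (\<lambda>_. S)) (obs_vec X n))"
    and psi_mono: "strict_mono_on {0..} \<psi>"
    and psi_bij: "bij_betw \<psi> {0..} {0..}"
    and Psi_lim: "filterlim \<Psi> at_top at_top"
    and I_pos: "\<forall>\<theta>\<in>\<Theta>all. \<forall>\<theta>'\<in>\<Theta>all. \<theta> \<noteq> \<theta>' \<longrightarrow> 0 < I \<theta> \<theta>'"
    and right_tail: "\<forall>\<epsilon>>0. \<forall>\<theta>\<in>\<Theta>all. \<forall>\<theta>'\<in>\<Theta>all. \<theta> \<noteq> \<theta>' \<longrightarrow>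
                 ((\<lambda>L::nat. measure (P \<theta>)
                     {\<omega>\<in>space \<Omega>. (1 / \<psi> (real L)) * Max ((\<lambda>n. llr p X \<theta> \<theta>' n \<omega>) ` {1..L})
                                   > (1 + \<epsilon>) * I \<theta> \<theta>'}) \<longlonglongrightarrow> 0)"
    and alpha_range: "\<forall>k i j. i \<le> N \<and> j \<le> N \<and> i \<noteq> j \<longrightarrow> 0 < \<alpha> k i j \<and> \<alpha> k i j < 1"
    and alpha_max_lim: "(\<lambda>k. alpha_max N (\<alpha> k)) \<longlonglongrightarrow> 0"
begin

lemma Psi_in: "x \<ge> 0 \<Longrightarrow> \<Psi> x \<ge> 0 \<and> \<psi> (\<Psi> x) = x"
  using psi_bij unfolding Psi_def bij_betw_def
  by (metis atLeast_iff f_inv_into_f inv_into_into)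

lemma psi_nonneg: "x \<ge> 0 \<Longrightarrow> \<psi> x \<ge> 0"
  using psi_bij unfolding bij_betw_def by auto

lemma psi_le: "0 \<le> x \<Longrightarrow> x \<le> y \<Longrightarrow> \<psi> x \<le> \<psi> y"
proof (cases "x = y")
  case False
  assume "0 \<le> x" "x \<le> y"
  with False have "\<psi> x < \<psi> y" using psi_mono unfolding strict_mono_on_def by auto
  thus ?thesis by simp
qed simp

lemma psi_pos: "1 \<le> L \<Longrightarrow> \<psi> (real L) > 0"
proof -
  assume L: "1 \<le> L"
  hence "(0::real) < real L" by simp
  hence "\<psi> 0 < \<psi> (real L)" using psi_mono unfolding strict_mono_on_def by auto
  thus ?thesis using psi_nonneg[of 0] by simp
qed

lemma Psi_le: "0 \<le> x \<Longrightarrow> x \<le> y \<Longrightarrow> \<Psi> x \<le> \<Psi> y"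
proof (rule ccontr)
  assume a: "0 \<le> x" "x \<le> y" "\<not> \<Psi> x \<le> \<Psi> y"
  have x0: "\<Psi> x \<ge> 0" "\<Psi> y \<ge> 0" using Psi_in[of x] Psi_in[of y] a by auto
  have "\<psi> (\<Psi> y) < \<psi> (\<Psi> x)" using a psi_mono x0
    unfolding strict_mono_on_def by auto
  thus False using a Psi_in[of x] Psi_in[of y] by auto
qed

lemma alpha_le_max: "i \<le> N \<Longrightarrow> j \<le> N \<Longrightarrow> i \<noteq> j \<Longrightarrow> \<alpha> k i j \<le> alpha_max N (\<alpha> k)"
proof -
  assume a: "i \<le> N" "j \<le> N" "i \<noteq> j"
  have "{\<alpha> k i j | i j. i \<le> N \<and> j \<le> N \<and> i \<noteq> j} \<subseteq> (\<lambda>(i,j). \<alpha> k i j) ` ({0..N} \<times> {0..N})"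
    by auto
  hence "finite {\<alpha> k i j | i j. i \<le> N \<and> j \<le> N \<and> i \<noteq> j}" by (rule finite_subset) auto
  thus ?thesis unfolding alpha_max_def using a by (intro Max_ge) auto
qed

lemma alpha_lim: "i \<le> N \<Longrightarrow> j \<le> N \<Longrightarrow> i \<noteq> j \<Longrightarrow> (\<lambda>k. \<alpha> k i j) \<longlonglongrightarrow> 0"
proof -
  assume a: "i \<le> N" "j \<le> N" "i \<noteq> j"
  show ?thesis
  proof (rule tendsto_sandwich[of "\<lambda>_. 0" _ _ "\<lambda>k. alpha_max N (\<alpha> k)"])
    show "\<forall>\<^sub>F n in sequentially. 0 \<le> \<alpha> n i j"
      using alpha_range a by (intro always_eventually allI) (simp add: less_imp_le)
    show "\<forall>\<^sub>F n in sequentially. \<alpha> n i j \<le> alpha_max N (\<alpha> n)"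
      using alpha_le_max[OF a] by simp
  qed (auto simp: alpha_max_lim)
qed

lemma ln_alpha_lim: "i \<le> N \<Longrightarrow> j \<le> N \<Longrightarrow> i \<noteq> j \<Longrightarrow> filterlim (\<lambda>k. ln (\<alpha> k i j)) at_bot sequentially"
proof -
  assume a: "i \<le> N" "j \<le> N" "i \<noteq> j"
  have "filterlim (\<lambda>k. \<alpha> k i j) (at_right 0) sequentially"
    using alpha_lim[OF a] alpha_range a by (intro tendsto_imp_filterlim_at_right) auto
  thus ?thesis by (rule filterlim_compose[OF ln_at_0])
qed

lemma abs_ln_alpha: "i \<le> N \<Longrightarrow> j \<le> N \<Longrightarrow> i \<noteq> j \<Longrightarrow> \<bar>ln (\<alpha> k i j)\<bar> = - ln (\<alpha> k i j)"
  using alpha_range by (simp add: abs_if)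

lemma class_props:
  assumes "D \<in> test_class \<Omega> S X N \<Theta> P a"
  shows "is_test \<Omega> S X N (fst D) (snd D)"
    "\<And>i j v. i \<le> N \<Longrightarrow> j \<le> N \<Longrightarrow> i \<noteq> j \<Longrightarrow> v \<in> \<Theta> i \<Longrightarrow>
        measure (P v) (accept_event \<Omega> (fst D) (snd D) j) \<le> a i j"
  using assms unfolding test_class_def by auto

lemma Theta_sub: "j \<le> N \<Longrightarrow> \<Theta> j \<subseteq> \<Theta>all"
  unfolding Theta_all_def by auto

lemma core:
  assumes th: "\<theta> \<in> \<Theta>all" and ij: "i \<le> N" "j \<le> N" "j \<noteq> i" and nj: "\<theta> \<notin> \<Theta> j"
    and cpos: "Ij I \<Theta> j \<theta> > 0" and eps: "0 < \<epsilon>" "\<epsilon> < 1"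
  shows "\<exists>b. b \<longlonglongrightarrow> 0 \<and> (\<forall>k. \<forall>D\<in>test_class \<Omega> S X N \<Theta> P (\<alpha> k).
     measure (P \<theta>) {\<omega>\<in>space \<Omega>. fst D \<omega> \<le> enat (nat \<lfloor>\<Psi> ((1-\<epsilon>) * (\<bar>ln (\<alpha> k j i)\<bar> / Ij I \<Theta> j \<theta>))\<rfloor>)
                                  \<and> snd D \<omega> = i} \<le> b k)"
proof -
  define c where "c = Ij I \<Theta> j \<theta>"
  have c: "c > 0" using cpos c_def by simp
  define \<delta> where "\<delta> = \<epsilon> / 4"
  have d0: "\<delta> > 0" using eps \<delta>_def by simp
  have d1: "(1+\<delta>)^2*(1-\<epsilon>) < 1"
  proof -
    have "(1+\<delta>)^2 \<le> 1 + 3*\<epsilon>/4" unfolding \<delta>_def power2_eq_square using eps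
      by (simp add: algebra_simps)
    hence "(1+\<delta>)^2*(1-\<epsilon>) \<le> (1 + 3*\<epsilon>/4)*(1-\<epsilon>)" using eps by (intro mult_right_mono) auto
    also have "\<dots> < 1"
    proof -
      have h: "0 < \<epsilon> + \<epsilon> * (\<epsilon> * 3)" using eps by (intro add_pos_pos mult_pos_pos) auto
      have q: "(1 + 3*\<epsilon>/4)*(1-\<epsilon>) = 1 - (\<epsilon> + \<epsilon> * (\<epsilon> * 3))/4" by (simp add: field_simps)
      have "1 - (\<epsilon> + \<epsilon> * (\<epsilon> * 3))/4 < 1" using h by simp
      with q show ?thesis by simp
    qed
    finally show ?thesis .
  qed
  define \<eta> where "\<eta> = 1 - (1+\<delta>)^2*(1-\<epsilon>)"
  have eta: "\<eta> > 0" using d1 \<eta>_def by simp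
  have bdd: "bdd_below ((\<lambda>v. I \<theta> v) ` \<Theta> j)"
  proof (rule bdd_belowI2[of _ 0])
    fix v assume "v \<in> \<Theta> j"
    thus "0 \<le> I \<theta> v" using I_pos th Theta_sub[OF ij(2)] nj by (metis less_imp_le subsetD)
  qed
  have "(INF v\<in>\<Theta> j. I \<theta> v) < (1+\<delta>)*c" using c d0 unfolding c_def Ij_def by simp
  then obtain v where v: "v \<in> \<Theta> j" "I \<theta> v < (1+\<delta>)*c"
    using cINF_less_iff[OF _ bdd] Theta_ne ij(2) by blast
  have vall: "v \<in> \<Theta>all" using v Theta_sub[OF ij(2)] by auto
  have vne: "\<theta> \<noteq> v" using v nj by auto
  have Ipos: "I \<theta> v > 0" using I_pos th vall vne by auto
  define M where "M k = nat \<lfloor>\<Psi> ((1-\<epsilon>) * (\<bar>ln (\<alpha> k j i)\<bar> / c))\<rfloor>" for k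
  define tail where "tail L = measure (P \<theta>)
     {\<omega>\<in>space \<Omega>. (1 / \<psi> (real L)) * Max ((\<lambda>n. llr p X \<theta> v n \<omega>) ` {1..L}) > (1 + \<delta>) * I \<theta> v}" for L
  define a where "a k = \<psi> (real (M k)) * ((1+\<delta>) * I \<theta> v)" for k
  define b where "b k = (if M k \<ge> 1 then exp (a k) * \<alpha> k j i + tail (M k) else 1)" for k
  have Pth: "prob_space (P \<theta>)" "sets (P \<theta>) = sets \<Omega>" using P_prob th by auto
  have Pv: "prob_space (P v)" "sets (P v) = sets \<Omega>" using P_prob vall by auto
  have mu: "\<forall>n\<ge>1. sets (\<mu> n) = sets (PiM {1..n} (\<lambda>_. S))" using mu_sf by auto
  have dt: "\<forall>n\<ge>1. (\<forall>x. 0 \<le> p \<theta> n x) \<and> p \<theta> n \<in> borel_measurable (PiM {1..n} (\<lambda>_. S))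
              \<and> distr (P \<theta>) (PiM {1..n} (\<lambda>_. S)) (obs_vec X n) = density (\<mu> n) (\<lambda>x. ennreal (p \<theta> n x))"
    using dens th by auto
  have dv: "\<forall>n\<ge>1. (\<forall>x. 0 \<le> p v n x) \<and> p v n \<in> borel_measurable (PiM {1..n} (\<lambda>_. S))
              \<and> distr (P v) (PiM {1..n} (\<lambda>_. S)) (obs_vec X n) = density (\<mu> n) (\<lambda>x. ennreal (p v n x))"
    using dens vall by auto
  have ac: "\<forall>n\<ge>1. absolutely_continuous (distr (P v) (PiM {1..n} (\<lambda>_. S)) (obs_vec X n))
                                   (distr (P \<theta>) (PiM {1..n} (\<lambda>_. S)) (obs_vec X n))"
    using mut_ac th vall by auto
  have a0: "a k \<ge> 0" for k unfolding a_def using psi_nonneg[of "real (M k)"] Ipos d0 by simp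
  have bound: "\<forall>k. \<forall>D\<in>test_class \<Omega> S X N \<Theta> P (\<alpha> k).
     measure (P \<theta>) {\<omega>\<in>space \<Omega>. fst D \<omega> \<le> enat (M k) \<and> snd D \<omega> = i} \<le> b k"
  proof (intro allI ballI)
    fix k D assume D: "D \<in> test_class \<Omega> S X N \<Theta> P (\<alpha> k)"
    note cp = class_props[OF D]
    show "measure (P \<theta>) {\<omega>\<in>space \<Omega>. fst D \<omega> \<le> enat (M k) \<and> snd D \<omega> = i} \<le> b k"
    proof (cases "M k \<ge> 1")
      case True
      have tb: "measure (P \<theta>) {\<omega>\<in>space \<Omega>. fst D \<omega> \<le> enat (M k) \<and> snd D \<omega> = i}
        \<le> exp (a k) * measure (P v) (accept_event \<Omega> (fst D) (snd D) i)
          + measure (P \<theta>) {\<omega>\<in>space \<Omega>. a k < Max ((\<lambda>n. llr p X \<theta> v n \<omega>) ` {1..M k})}"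
        by (rule test_bound[OF X_meas Pth Pv mu dt dv ac cp(1) True a0])
      have acc: "measure (P v) (accept_event \<Omega> (fst D) (snd D) i) \<le> \<alpha> k j i"
        using cp(2)[OF ij(2) ij(1) ij(3) v(1)] .
      have ps: "\<psi> (real (M k)) > 0" using psi_pos[OF True] .
      have seteq: "{\<omega>\<in>space \<Omega>. a k < Max ((\<lambda>n. llr p X \<theta> v n \<omega>) ` {1..M k})}
         = {\<omega>\<in>space \<Omega>. (1 / \<psi> (real (M k))) * Max ((\<lambda>n. llr p X \<theta> v n \<omega>) ` {1..M k}) > (1 + \<delta>) * I \<theta> v}"
        using ps unfolding a_def by (auto simp: field_simps mult.commute)
      have "exp (a k) * measure (P v) (accept_event \<Omega> (fst D) (snd D) i) \<le> exp (a k) * \<alpha> k j i"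
        using acc by simp
      hence "measure (P \<theta>) {\<omega>\<in>space \<Omega>. fst D \<omega> \<le> enat (M k) \<and> snd D \<omega> = i}
        \<le> exp (a k) * \<alpha> k j i
          + measure (P \<theta>) {\<omega>\<in>space \<Omega>. a k < Max ((\<lambda>n. llr p X \<theta> v n \<omega>) ` {1..M k})}"
        using tb by linarith
      thus ?thesis unfolding seteq b_def tail_def using True by simp
    next
      case False
      have "measure (P \<theta>) {\<omega>\<in>space \<Omega>. fst D \<omega> \<le> enat (M k) \<and> snd D \<omega> = i} \<le> 1"
        using prob_space.prob_le_1[OF Pth(1)] by simp
      thus ?thesis using False unfolding b_def by simp
    qed
  qed
  have neg: "filterlim (\<lambda>k. - ln (\<alpha> k j i)) at_top sequentially"
    using ln_alpha_lim[OF ij(2) ij(1) ij(3)] unfolding filterlim_uminus_at_bot .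
  have tlim: "filterlim (\<lambda>k. (1-\<epsilon>) * (\<bar>ln (\<alpha> k j i)\<bar> / c)) at_top sequentially"
  proof -
    have "filterlim (\<lambda>k. ((1-\<epsilon>)/c) * (- ln (\<alpha> k j i))) at_top sequentially"
      using eps c by (intro filterlim_tendsto_pos_mult_at_top[OF tendsto_const _ neg]) auto
    moreover have "(1-\<epsilon>) * (\<bar>ln (\<alpha> k j i)\<bar> / c) = ((1-\<epsilon>)/c) * (- ln (\<alpha> k j i))" for k
      using abs_ln_alpha[OF ij(2) ij(1) ij(3)] by simp
    ultimately show ?thesis by simp
  qed
  have Mlim: "filterlim M at_top sequentially"
    unfolding M_def
    by (rule filterlim_compose[OF filterlim_nat_sequentially
          filterlim_compose[OF filterlim_floor_sequentially filterlim_compose[OF Psi_lim tlim]]])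
  have ev1: "eventually (\<lambda>k. M k \<ge> 1) sequentially"
    using Mlim unfolding filterlim_at_top by blast
  have tail_lim: "(\<lambda>k. tail (M k)) \<longlonglongrightarrow> 0"
  proof -
    have "tail \<longlonglongrightarrow> 0" unfolding tail_def using right_tail d0 th vall vne by blast
    thus ?thesis using filterlim_compose[OF _ Mlim] by blast
  qed
  have exp_lim: "(\<lambda>k. exp (\<eta> * ln (\<alpha> k j i))) \<longlonglongrightarrow> 0"
  proof -
    have "filterlim (\<lambda>k. \<eta> * (- ln (\<alpha> k j i))) at_top sequentially"
      using eta by (intro filterlim_tendsto_pos_mult_at_top[OF tendsto_const _ neg]) auto
    hence "filterlim (\<lambda>k. \<eta> * ln (\<alpha> k j i)) at_bot sequentially"
      unfolding filterlim_uminus_at_bot by (simp add: mult_minus_right)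
    thus ?thesis by (rule filterlim_compose[OF exp_at_bot])
  qed
  have b0: "b k \<ge> 0" for k
  proof -
    have "\<alpha> k j i > 0" using alpha_range ij by auto
    hence "exp (a k) * \<alpha> k j i \<ge> 0" by simp
    moreover have "tail (M k) \<ge> 0" unfolding tail_def by simp
    ultimately show ?thesis unfolding b_def by simp
  qed
  have bnd: "eventually (\<lambda>k. b k \<le> exp (\<eta> * ln (\<alpha> k j i)) + tail (M k)) sequentially"
    using ev1
  proof eventually_elim
    case (elim k)
    have al: "\<alpha> k j i > 0" using alpha_range ij by auto
    define t where "t = (1-\<epsilon>) * (\<bar>ln (\<alpha> k j i)\<bar> / c)"
    have t0: "t \<ge> 0" unfolding t_def using eps c by simp
    have "real (M k) \<le> \<Psi> t" unfolding M_def using nat_floor_le[of "\<Psi> t"] Psi_in[OF t0] t_def by simp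
    hence "\<psi> (real (M k)) \<le> \<psi> (\<Psi> t)" by (intro psi_le) auto
    hence pM: "\<psi> (real (M k)) \<le> t" using Psi_in[OF t0] by simp
    have "a k \<le> t * ((1+\<delta>) * ((1+\<delta>)*c))" unfolding a_def
      using pM psi_nonneg[of "real (M k)"] v(2) d0 Ipos t0
      by (intro mult_mono) auto
    also have "\<dots> = (1-\<eta>) * (- ln (\<alpha> k j i))"
      unfolding t_def \<eta>_def using c abs_ln_alpha[OF ij(2) ij(1) ij(3)] by (simp add: power2_eq_square field_simps)
    finally have "a k + ln (\<alpha> k j i) \<le> \<eta> * ln (\<alpha> k j i)" by (simp add: algebra_simps)
    hence "exp (a k + ln (\<alpha> k j i)) \<le> exp (\<eta> * ln (\<alpha> k j i))" by simp
    hence "exp (a k) * \<alpha> k j i \<le> exp (\<eta> * ln (\<alpha> k j i))" using al by (simp add: exp_add)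
    thus ?case using elim unfolding b_def by simp
  qed
  have "b \<longlonglongrightarrow> 0"
  proof (rule tendsto_sandwich[of "\<lambda>_. 0" b _ "\<lambda>k. exp (\<eta> * ln (\<alpha> k j i)) + tail (M k)"])
    show "\<forall>\<^sub>F n in sequentially. 0 \<le> b n" using b0 by simp
    show "\<forall>\<^sub>F n in sequentially. b n \<le> exp (\<eta> * ln (\<alpha> n j i)) + tail (M n)" by (rule bnd)
    show "(\<lambda>k. exp (\<eta> * ln (\<alpha> k j i)) + tail (M k)) \<longlonglongrightarrow> 0"
      using tendsto_add[OF exp_lim tail_lim] by simp
  qed simp
  thus ?thesis using bound unfolding M_def c_def by blast
qed

end



lemma test_sets:
  assumes Xm: "\<forall>i. X i \<in> measurable \<Omega> S" and t: "is_test \<Omega> S X N T d"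
  shows "{\<omega>\<in>space \<Omega>. T \<omega> = enat n \<and> d \<omega> = i} \<in> sets \<Omega>"
    "{\<omega>\<in>space \<Omega>. T \<omega> \<le> enat m} \<in> sets \<Omega>"
    "{\<omega>\<in>space \<Omega>. T \<omega> \<le> enat m \<and> d \<omega> = i} \<in> sets \<Omega>"
    "accept_event \<Omega> T d i \<in> sets \<Omega>"
proof -
  have K: "{\<omega>\<in>space \<Omega>. T \<omega> = enat n \<and> d \<omega> = i} \<in> sets \<Omega>" for n i
    using obs_filt_sets_sub[OF Xm] t unfolding is_test_def by blast
  thus "{\<omega>\<in>space \<Omega>. T \<omega> = enat n \<and> d \<omega> = i} \<in> sets \<Omega>" .
  show "{\<omega>\<in>space \<Omega>. T \<omega> \<le> enat m} \<in> sets \<Omega>"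
    using obs_filt_sets_sub[OF Xm] t unfolding is_test_def by blast
  have "{\<omega>\<in>space \<Omega>. T \<omega> \<le> enat m \<and> d \<omega> = i} = (\<Union>n\<in>{0..m}. {\<omega>\<in>space \<Omega>. T \<omega> = enat n \<and> d \<omega> = i})"
    using enat_le_iff by auto
  thus "{\<omega>\<in>space \<Omega>. T \<omega> \<le> enat m \<and> d \<omega> = i} \<in> sets \<Omega>" using K by auto
  have "accept_event \<Omega> T d i = (\<Union>n. {\<omega>\<in>space \<Omega>. T \<omega> = enat n \<and> d \<omega> = i})"
    unfolding accept_event_def by auto
  thus "accept_event \<Omega> T d i \<in> sets \<Omega>" using K by auto
qed

lemma INF_to_one:
  fixes f :: "nat \<Rightarrow> 'd \<Rightarrow> real"
  assumes ne: "\<And>k. C k \<noteq> {}" and b: "\<And>k D. D \<in> C k \<Longrightarrow> 1 - c k \<le> f k D \<and> f k D \<le> 1"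
    and c: "c \<longlonglongrightarrow> 0"
  shows "(\<lambda>k. INF D\<in>C k. f k D) \<longlonglongrightarrow> 1"
proof (rule tendsto_sandwich[of "\<lambda>k. 1 - c k" _ _ "\<lambda>_. 1"])
  show "\<forall>\<^sub>F k in sequentially. 1 - c k \<le> (INF D\<in>C k. f k D)"
    using ne b by (intro always_eventually allI cINF_greatest) auto
  show "\<forall>\<^sub>F k in sequentially. (INF D\<in>C k. f k D) \<le> 1"
  proof (intro always_eventually allI)
    fix k
    obtain D where D: "D \<in> C k" using ne by blast
    have "bdd_below (f k ` C k)" using b by (intro bdd_belowI2[of _ "1 - c k"]) auto
    hence "(INF D\<in>C k. f k D) \<le> f k D" using D by (rule cINF_lower)
    thus "(INF D\<in>C k. f k D) \<le> 1" using b[OF D] by linarith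
  qed
  show "(\<lambda>k. 1 - c k) \<longlonglongrightarrow> 1" using tendsto_diff[OF tendsto_const c, of 1] by simp
qed simp

lemma nat_le_floor_iff: "0 \<le> (x::real) \<Longrightarrow> (n \<le> nat \<lfloor>x\<rfloor>) = (real n \<le> x)"
  by (metis le_floor_iff le_nat_iff of_int_of_nat_eq zero_le_floor)

lemma T_gt_iff: "0 \<le> x \<Longrightarrow> T_gt T x \<omega> \<longleftrightarrow> \<not> T \<omega> \<le> enat (nat \<lfloor>x\<rfloor>)"
  unfolding T_gt_def by (cases "T \<omega>") (auto simp: nat_le_floor_iff not_le)

context setting
begin

lemma trivial_test: "(\<lambda>_. \<infinity>, \<lambda>_. 0) \<in> test_class \<Omega> S X N \<Theta> P (\<alpha> k)"
proof -
  have "is_test \<Omega> S X N (\<lambda>_. \<infinity>) (\<lambda>_. 0)"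
    unfolding is_test_def by (auto simp: sets.empty_sets)
  moreover have "accept_event \<Omega> (\<lambda>_. \<infinity>) (\<lambda>_. 0) j = {}" for j unfolding accept_event_def by auto
  ultimately show ?thesis unfolding test_class_def using alpha_range by (auto intro: less_imp_le)
qed

end

locale setting2 = setting +
  assumes N_ge: "N \<ge> 1"
    and Psi_reg: "\<exists>g. (\<forall>\<^sub>F \<delta> in at 1. ((\<lambda>t. \<Psi> (\<delta> * t) / \<Psi> t) \<longlongrightarrow> g \<delta>) at_top)
                      \<and> (g \<longlongrightarrow> 1) (at 1)"
    and sep1: "\<forall>i\<le>N. \<forall>\<theta>\<in>\<Theta> i. 0 < Min ((\<lambda>j. Ij I \<Theta> j \<theta>) ` ({0..N} - {i}))"
    and sep2: "\<forall>\<theta>\<in>\<Theta>in. 0 < Min ((\<lambda>i. Ij I \<Theta> i \<theta>) ` {0..N})"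
begin

lemma J_ne: "i \<le> N \<Longrightarrow> {0..N} - {i} \<noteq> {}"
  using N_ge by (cases "i = 0") auto

lemma Fbound_nonneg:
  assumes i: "i \<le> N" and J: "\<forall>j\<in>{0..N}-{i}. Ij I \<Theta> j \<theta> > 0" and e: "\<epsilon> \<le> 1"
  shows "Fbound \<Psi> I \<Theta> N i \<theta> \<epsilon> a \<ge> 0"
proof -
  define r where "r j = \<bar>ln (a j i)\<bar> / Ij I \<Theta> j \<theta>" for j
  have "Max (r ` ({0..N} - {i})) \<in> r ` ({0..N} - {i})"
    using J_ne[OF i] by (intro Max_in) auto
  then obtain j where j: "j \<in> {0..N}-{i}" "Max (r ` ({0..N} - {i})) = r j" by blast
  have "r j \<ge> 0" using J j(1) unfolding r_def by (simp add: less_imp_le)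
  hence "(1 - \<epsilon>) * Max (r ` ({0..N} - {i})) \<ge> 0" using j(2) e by simp
  hence "(1 - \<epsilon>) * Max ((\<lambda>j. \<bar>ln (a j i)\<bar> / Ij I \<Theta> j \<theta>) ` ({0..N} - {i})) \<ge> 0"
    unfolding r_def .
  thus ?thesis unfolding Fbound_def using Psi_in by blast
qed

lemma sum_bound:
  assumes th: "\<theta> \<in> \<Theta>all" and i: "i \<le> N"
    and J: "\<forall>j\<in>{0..N}-{i}. \<theta> \<notin> \<Theta> j \<and> Ij I \<Theta> j \<theta> > 0" and eps: "0 < \<epsilon>" "\<epsilon> < 1"
  shows "\<exists>b. b \<longlonglongrightarrow> 0 \<and> (\<forall>k. \<forall>D\<in>test_class \<Omega> S X N \<Theta> P (\<alpha> k). \<forall>m.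
     real m \<le> Fbound \<Psi> I \<Theta> N i \<theta> \<epsilon> (\<alpha> k) \<longrightarrow>
     measure (P \<theta>) {\<omega>\<in>space \<Omega>. fst D \<omega> \<le> enat m \<and> snd D \<omega> = i} \<le> b k)"
proof -
  define J where "J = {0..N} - {i}"
  have "\<forall>j\<in>J. \<exists>b. b \<longlonglongrightarrow> 0 \<and> (\<forall>k. \<forall>D\<in>test_class \<Omega> S X N \<Theta> P (\<alpha> k).
     measure (P \<theta>) {\<omega>\<in>space \<Omega>. fst D \<omega> \<le> enat (nat \<lfloor>\<Psi> ((1-\<epsilon>) * (\<bar>ln (\<alpha> k j i)\<bar> / Ij I \<Theta> j \<theta>))\<rfloor>)
                                  \<and> snd D \<omega> = i} \<le> b k)"
  proof
    fix j assume j: "j \<in> J"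
    show "\<exists>b. b \<longlonglongrightarrow> 0 \<and> (\<forall>k. \<forall>D\<in>test_class \<Omega> S X N \<Theta> P (\<alpha> k).
     measure (P \<theta>) {\<omega>\<in>space \<Omega>. fst D \<omega> \<le> enat (nat \<lfloor>\<Psi> ((1-\<epsilon>) * (\<bar>ln (\<alpha> k j i)\<bar> / Ij I \<Theta> j \<theta>))\<rfloor>)
                                  \<and> snd D \<omega> = i} \<le> b k)"
      using j J unfolding J_def by (intro core[OF th i]) (auto simp: eps)
  qed
  from bchoice[OF this] obtain B where B: "\<forall>j\<in>J. B j \<longlonglongrightarrow> 0 \<and> (\<forall>k. \<forall>D\<in>test_class \<Omega> S X N \<Theta> P (\<alpha> k).
     measure (P \<theta>) {\<omega>\<in>space \<Omega>. fst D \<omega> \<le> enat (nat \<lfloor>\<Psi> ((1-\<epsilon>) * (\<bar>ln (\<alpha> k j i)\<bar> / Ij I \<Theta> j \<theta>))\<rfloor>)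
                                  \<and> snd D \<omega> = i} \<le> B j k)"
    by blast
  define b where "b k = (\<Sum>j\<in>J. B j k)" for k
  have Pth: "prob_space (P \<theta>)" "sets (P \<theta>) = sets \<Omega>" using P_prob th by auto
  interpret pt: prob_space "P \<theta>" by (rule Pth(1))
  have Bnn: "B j k \<ge> 0" if "j \<in> J" for j k
  proof -
    have "0 \<le> measure (P \<theta>) {\<omega>\<in>space \<Omega>. (\<lambda>_. \<infinity>::enat) \<omega> \<le> enat (nat \<lfloor>\<Psi> ((1-\<epsilon>) * (\<bar>ln (\<alpha> k j i)\<bar> / Ij I \<Theta> j \<theta>))\<rfloor>)
                                  \<and> (\<lambda>_. 0::nat) \<omega> = i}" by simp
    also have "\<dots> \<le> B j k" using B that trivial_test[of k] by fastforce
    finally show ?thesis .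
  qed
  have "b \<longlonglongrightarrow> 0" unfolding b_def using B tendsto_sum[of J "\<lambda>j k. B j k" "\<lambda>_. 0"] by simp
  moreover have "\<forall>k. \<forall>D\<in>test_class \<Omega> S X N \<Theta> P (\<alpha> k). \<forall>m.
     real m \<le> Fbound \<Psi> I \<Theta> N i \<theta> \<epsilon> (\<alpha> k) \<longrightarrow>
     measure (P \<theta>) {\<omega>\<in>space \<Omega>. fst D \<omega> \<le> enat m \<and> snd D \<omega> = i} \<le> b k"
  proof (intro allI ballI impI)
    fix k D m
    assume D: "D \<in> test_class \<Omega> S X N \<Theta> P (\<alpha> k)" and m: "real m \<le> Fbound \<Psi> I \<Theta> N i \<theta> \<epsilon> (\<alpha> k)"
    define r where "r j = \<bar>ln (\<alpha> k j i)\<bar> / Ij I \<Theta> j \<theta>" for j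
    have "Max (r ` J) \<in> r ` J" using J_ne[OF i] unfolding J_def by (intro Max_in) auto
    then obtain j where j: "j \<in> J" "Max (r ` J) = r j" by auto
    have rj: "r j \<ge> 0" using J j(1) unfolding r_def J_def by (simp add: less_imp_le)
    have F: "Fbound \<Psi> I \<Theta> N i \<theta> \<epsilon> (\<alpha> k) = \<Psi> ((1-\<epsilon>) * r j)"
      unfolding Fbound_def using j(2) unfolding r_def J_def by simp
    have F0: "\<Psi> ((1-\<epsilon>) * r j) \<ge> 0" using Psi_in[of "(1-\<epsilon>) * r j"] rj eps by simp
    have mle: "m \<le> nat \<lfloor>\<Psi> ((1-\<epsilon>) * r j)\<rfloor>" using m F F0 nat_le_floor_iff by simp
    have sets: "{\<omega>\<in>space \<Omega>. fst D \<omega> \<le> enat (nat \<lfloor>\<Psi> ((1-\<epsilon>) * r j)\<rfloor>) \<and> snd D \<omega> = i} \<in> sets (P \<theta>)"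
      using test_sets(3)[OF X_meas class_props(1)[OF D]] Pth(2) by simp
    have "measure (P \<theta>) {\<omega>\<in>space \<Omega>. fst D \<omega> \<le> enat m \<and> snd D \<omega> = i}
        \<le> measure (P \<theta>) {\<omega>\<in>space \<Omega>. fst D \<omega> \<le> enat (nat \<lfloor>\<Psi> ((1-\<epsilon>) * r j)\<rfloor>) \<and> snd D \<omega> = i}"
      using mle by (intro pt.finite_measure_mono[OF _ sets]) (auto intro: order_trans)
    also have "\<dots> \<le> B j k" using B j(1) D unfolding r_def by blast
    also have "\<dots> \<le> b k" unfolding b_def using j(1) Bnn unfolding J_def
      by (intro member_le_sum) auto
    finally show "measure (P \<theta>) {\<omega>\<in>space \<Omega>. fst D \<omega> \<le> enat m \<and> snd D \<omega> = i} \<le> b k" .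
  qed
  ultimately show ?thesis by blast
qed

lemma Pth_facts: "\<theta> \<in> \<Theta>all \<Longrightarrow> prob_space (P \<theta>) \<and> sets (P \<theta>) = sets \<Omega> \<and> space (P \<theta>) = space \<Omega>"
  using P_prob sets_eq_imp_space_eq by blast

lemma T_le_cover:
  assumes t: "is_test \<Omega> S X N T d" and i: "i \<le> N"
  shows "{\<omega>\<in>space \<Omega>. T \<omega> \<le> enat m} \<subseteq> {\<omega>\<in>space \<Omega>. T \<omega> \<le> enat m \<and> d \<omega> = i}
           \<union> (\<Union>j\<in>{0..N}-{i}. accept_event \<Omega> T d j)"
proof
  fix \<omega> assume w: "\<omega> \<in> {\<omega>\<in>space \<Omega>. T \<omega> \<le> enat m}"
  hence fin: "T \<omega> \<noteq> \<infinity>" using enat_le_iff by auto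
  hence dN: "d \<omega> \<le> N" using t w unfolding is_test_def by auto
  show "\<omega> \<in> {\<omega>\<in>space \<Omega>. T \<omega> \<le> enat m \<and> d \<omega> = i} \<union> (\<Union>j\<in>{0..N}-{i}. accept_event \<Omega> T d j)"
  proof (cases "d \<omega> = i")
    case True thus ?thesis using w by auto
  next
    case False thus ?thesis using w fin dN unfolding accept_event_def by auto
  qed
qed

lemma T_le_cover2:
  assumes t: "is_test \<Omega> S X N T d"
  shows "{\<omega>\<in>space \<Omega>. T \<omega> \<le> enat m} \<subseteq> (\<Union>i\<in>{0..N}. {\<omega>\<in>space \<Omega>. T \<omega> \<le> enat m \<and> d \<omega> = i})"
proof
  fix \<omega> assume w: "\<omega> \<in> {\<omega>\<in>space \<Omega>. T \<omega> \<le> enat m}"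
  hence fin: "T \<omega> \<noteq> \<infinity>" using enat_le_iff by auto
  hence dN: "d \<omega> \<le> N" using t w unfolding is_test_def by auto
  thus "\<omega> \<in> (\<Union>i\<in>{0..N}. {\<omega>\<in>space \<Omega>. T \<omega> \<le> enat m \<and> d \<omega> = i})" using w by auto
qed

lemma prob_T_gt:
  assumes th: "\<theta> \<in> \<Theta>all" and t: "is_test \<Omega> S X N T d" and x: "0 \<le> x"
  shows "measure (P \<theta>) {\<omega>\<in>space \<Omega>. T_gt T x \<omega>} = 1 - measure (P \<theta>) {\<omega>\<in>space \<Omega>. T \<omega> \<le> enat (nat \<lfloor>x\<rfloor>)}"
    "{\<omega>\<in>space \<Omega>. T_gt T x \<omega>} \<in> sets \<Omega>"
proof -
  note pf = Pth_facts[OF th]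
  interpret pt: prob_space "P \<theta>" using pf by blast
  have eq: "{\<omega>\<in>space \<Omega>. T_gt T x \<omega>} = space (P \<theta>) - {\<omega>\<in>space \<Omega>. T \<omega> \<le> enat (nat \<lfloor>x\<rfloor>)}"
    using pf by (auto simp: T_gt_iff[OF x])
  have sm: "{\<omega>\<in>space \<Omega>. T \<omega> \<le> enat (nat \<lfloor>x\<rfloor>)} \<in> sets \<Omega>" using test_sets(2)[OF X_meas t] .
  show "measure (P \<theta>) {\<omega>\<in>space \<Omega>. T_gt T x \<omega>} = 1 - measure (P \<theta>) {\<omega>\<in>space \<Omega>. T \<omega> \<le> enat (nat \<lfloor>x\<rfloor>)}"
    unfolding eq using sm pf by (intro pt.prob_compl) auto
  show "{\<omega>\<in>space \<Omega>. T_gt T x \<omega>} \<in> sets \<Omega>" unfolding eq using sm pf by auto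
qed

lemma part1_i:
  assumes i: "i \<le> N" and th: "\<theta> \<in> \<Theta> i" and eps: "0 < \<epsilon>" "\<epsilon> < 1"
  shows "(\<lambda>k. INF D\<in>test_class \<Omega> S X N \<Theta> P (\<alpha> k).
           measure (P \<theta>) {\<omega>\<in>space \<Omega>. T_gt (fst D) (Fbound \<Psi> I \<Theta> N i \<theta> \<epsilon> (\<alpha> k)) \<omega>}) \<longlonglongrightarrow> 1"
proof -
  define J where "J = {0..N} - {i}"
  have tha: "\<theta> \<in> \<Theta>all" using Theta_sub[OF i] th by auto
  note pf = Pth_facts[OF tha]
  interpret pt: prob_space "P \<theta>" using pf by blast
  have Jc: "\<forall>j\<in>{0..N}-{i}. \<theta> \<notin> \<Theta> j \<and> Ij I \<Theta> j \<theta> > 0"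
  proof
    fix j assume j: "j \<in> {0..N}-{i}"
    have "\<Theta> i \<inter> \<Theta> j = {}" using Theta_disj j i unfolding disjoint_family_on_def by auto
    moreover have "Min ((\<lambda>j. Ij I \<Theta> j \<theta>) ` ({0..N} - {i})) > 0" using sep1 i th by auto
    hence "Ij I \<Theta> j \<theta> > 0" using j J_ne[OF i] by (subst (asm) Min_gr_iff) auto
    ultimately show "\<theta> \<notin> \<Theta> j \<and> Ij I \<Theta> j \<theta> > 0" using th by auto
  qed
  obtain b where b: "b \<longlonglongrightarrow> 0" "\<forall>k. \<forall>D\<in>test_class \<Omega> S X N \<Theta> P (\<alpha> k). \<forall>m.
     real m \<le> Fbound \<Psi> I \<Theta> N i \<theta> \<epsilon> (\<alpha> k) \<longrightarrow>
     measure (P \<theta>) {\<omega>\<in>space \<Omega>. fst D \<omega> \<le> enat m \<and> snd D \<omega> = i} \<le> b k"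
    using sum_bound[OF tha i Jc eps] by blast
  define c where "c k = b k + (\<Sum>j\<in>J. \<alpha> k i j)" for k
  have c: "c \<longlonglongrightarrow> 0"
  proof -
    have "(\<lambda>k. \<Sum>j\<in>J. \<alpha> k i j) \<longlonglongrightarrow> (\<Sum>j\<in>J. 0)"
      using alpha_lim i unfolding J_def by (intro tendsto_sum) auto
    thus ?thesis unfolding c_def using tendsto_add[OF b(1)] by fastforce
  qed
  show ?thesis
  proof (rule INF_to_one[OF _ _ c])
    fix k show "test_class \<Omega> S X N \<Theta> P (\<alpha> k) \<noteq> {}" using trivial_test by blast
  next
    fix k D assume D: "D \<in> test_class \<Omega> S X N \<Theta> P (\<alpha> k)"
    note cp = class_props[OF D]
    define F where "F = Fbound \<Psi> I \<Theta> N i \<theta> \<epsilon> (\<alpha> k)"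
    have F0: "F \<ge> 0" unfolding F_def using Fbound_nonneg[OF i] Jc eps by auto
    define m where "m = nat \<lfloor>F\<rfloor>"
    have pe: "measure (P \<theta>) {\<omega>\<in>space \<Omega>. T_gt (fst D) F \<omega>} = 1 - measure (P \<theta>) {\<omega>\<in>space \<Omega>. fst D \<omega> \<le> enat m}"
      unfolding m_def by (rule prob_T_gt(1)[OF tha cp(1) F0])
    have s1: "{\<omega>\<in>space \<Omega>. fst D \<omega> \<le> enat m \<and> snd D \<omega> = i} \<in> sets (P \<theta>)"
      using test_sets(3)[OF X_meas cp(1)] pf by auto
    have s2: "accept_event \<Omega> (fst D) (snd D) j \<in> sets (P \<theta>)" for j
      using test_sets(4)[OF X_meas cp(1)] pf by auto
    have "measure (P \<theta>) {\<omega>\<in>space \<Omega>. fst D \<omega> \<le> enat m}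
        \<le> measure (P \<theta>) ({\<omega>\<in>space \<Omega>. fst D \<omega> \<le> enat m \<and> snd D \<omega> = i}
           \<union> (\<Union>j\<in>J. accept_event \<Omega> (fst D) (snd D) j))"
      using T_le_cover[OF cp(1) i, of m] s1 s2 unfolding J_def
      by (intro pt.finite_measure_mono) auto
    also have "\<dots> \<le> measure (P \<theta>) {\<omega>\<in>space \<Omega>. fst D \<omega> \<le> enat m \<and> snd D \<omega> = i}
           + measure (P \<theta>) (\<Union>j\<in>J. accept_event \<Omega> (fst D) (snd D) j)"
      using s1 s2 unfolding J_def by (intro measure_Un_le) auto
    also have "measure (P \<theta>) (\<Union>j\<in>J. accept_event \<Omega> (fst D) (snd D) j)
        \<le> (\<Sum>j\<in>J. measure (P \<theta>) (accept_event \<Omega> (fst D) (snd D) j))"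
      using s2 unfolding J_def by (intro measure_UNION_le) auto
    also have "\<dots> \<le> (\<Sum>j\<in>J. \<alpha> k i j)"
      using cp(2)[OF i _ _ th] unfolding J_def by (intro sum_mono) auto
    also have "measure (P \<theta>) {\<omega>\<in>space \<Omega>. fst D \<omega> \<le> enat m \<and> snd D \<omega> = i} \<le> b k"
      using b(2) D nat_floor_le[OF F0] unfolding m_def F_def by blast
    finally have "measure (P \<theta>) {\<omega>\<in>space \<Omega>. fst D \<omega> \<le> enat m} \<le> c k" unfolding c_def by simp
    thus "1 - c k \<le> measure (P \<theta>) {\<omega>\<in>space \<Omega>. T_gt (fst D) (Fbound \<Psi> I \<Theta> N i \<theta> \<epsilon> (\<alpha> k)) \<omega>}
       \<and> measure (P \<theta>) {\<omega>\<in>space \<Omega>. T_gt (fst D) (Fbound \<Psi> I \<Theta> N i \<theta> \<epsilon> (\<alpha> k)) \<omega>} \<le> 1"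
      using pe unfolding F_def by simp
  qed
qed

lemma part1_in:
  assumes th: "\<theta> \<in> \<Theta>in" and eps: "0 < \<epsilon>" "\<epsilon> < 1"
  shows "(\<lambda>k. INF D\<in>test_class \<Omega> S X N \<Theta> P (\<alpha> k).
           measure (P \<theta>) {\<omega>\<in>space \<Omega>. T_gt (fst D) (Min ((\<lambda>i. Fbound \<Psi> I \<Theta> N i \<theta> \<epsilon> (\<alpha> k)) ` {0..N})) \<omega>})
         \<longlonglongrightarrow> 1"
proof -
  have tha: "\<theta> \<in> \<Theta>all" using th unfolding Theta_all_def by auto
  note pf = Pth_facts[OF tha]
  interpret pt: prob_space "P \<theta>" using pf by blast
  have Jc: "\<forall>j\<in>{0..N}-{i}. \<theta> \<notin> \<Theta> j \<and> Ij I \<Theta> j \<theta> > 0" for i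
  proof
    fix j assume j: "j \<in> {0..N}-{i}"
    have "Min ((\<lambda>i. Ij I \<Theta> i \<theta>) ` {0..N}) > 0" using sep2 th by auto
    hence "Ij I \<Theta> j \<theta> > 0" using j by (subst (asm) Min_gr_iff) auto
    thus "\<theta> \<notin> \<Theta> j \<and> Ij I \<Theta> j \<theta> > 0" using Theta_in_disj th j by auto
  qed
  have "\<forall>i\<in>{0..N}. \<exists>b. b \<longlonglongrightarrow> 0 \<and> (\<forall>k. \<forall>D\<in>test_class \<Omega> S X N \<Theta> P (\<alpha> k). \<forall>m.
     real m \<le> Fbound \<Psi> I \<Theta> N i \<theta> \<epsilon> (\<alpha> k) \<longrightarrow>
     measure (P \<theta>) {\<omega>\<in>space \<Omega>. fst D \<omega> \<le> enat m \<and> snd D \<omega> = i} \<le> b k)"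
    using sum_bound[OF tha _ Jc eps] by auto
  from bchoice[OF this] obtain B where B: "\<forall>i\<in>{0..N}. B i \<longlonglongrightarrow> 0 \<and> (\<forall>k. \<forall>D\<in>test_class \<Omega> S X N \<Theta> P (\<alpha> k). \<forall>m.
     real m \<le> Fbound \<Psi> I \<Theta> N i \<theta> \<epsilon> (\<alpha> k) \<longrightarrow>
     measure (P \<theta>) {\<omega>\<in>space \<Omega>. fst D \<omega> \<le> enat m \<and> snd D \<omega> = i} \<le> B i k)" by blast
  define c where "c k = (\<Sum>i\<in>{0..N}. B i k)" for k
  have c: "c \<longlonglongrightarrow> 0" unfolding c_def using B tendsto_sum[of "{0..N}" "\<lambda>i k. B i k" "\<lambda>_. 0"] by simp
  show ?thesis
  proof (rule INF_to_one[OF _ _ c])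
    fix k show "test_class \<Omega> S X N \<Theta> P (\<alpha> k) \<noteq> {}" using trivial_test by blast
  next
    fix k D assume D: "D \<in> test_class \<Omega> S X N \<Theta> P (\<alpha> k)"
    note cp = class_props[OF D]
    define F where "F = Min ((\<lambda>i. Fbound \<Psi> I \<Theta> N i \<theta> \<epsilon> (\<alpha> k)) ` {0..N})"
    have Fle: "F \<le> Fbound \<Psi> I \<Theta> N i \<theta> \<epsilon> (\<alpha> k)" if "i \<le> N" for i
      unfolding F_def using that by (intro Min_le) auto
    have "F \<in> (\<lambda>i. Fbound \<Psi> I \<Theta> N i \<theta> \<epsilon> (\<alpha> k)) ` {0..N}" unfolding F_def by (intro Min_in) auto
    then obtain i0 where i0: "i0 \<le> N" "F = Fbound \<Psi> I \<Theta> N i0 \<theta> \<epsilon> (\<alpha> k)" by auto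
    have "\<forall>j\<in>{0..N}-{i0}. 0 < Ij I \<Theta> j \<theta>" using Jc[of i0] by blast
    hence F0: "F \<ge> 0" using i0 Fbound_nonneg[OF i0(1)] eps by auto
    define m where "m = nat \<lfloor>F\<rfloor>"
    have pe: "measure (P \<theta>) {\<omega>\<in>space \<Omega>. T_gt (fst D) F \<omega>} = 1 - measure (P \<theta>) {\<omega>\<in>space \<Omega>. fst D \<omega> \<le> enat m}"
      unfolding m_def by (rule prob_T_gt(1)[OF tha cp(1) F0])
    have s1: "{\<omega>\<in>space \<Omega>. fst D \<omega> \<le> enat m \<and> snd D \<omega> = i} \<in> sets (P \<theta>)" for i
      using test_sets(3)[OF X_meas cp(1)] pf by auto
    have "measure (P \<theta>) {\<omega>\<in>space \<Omega>. fst D \<omega> \<le> enat m}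
        \<le> measure (P \<theta>) (\<Union>i\<in>{0..N}. {\<omega>\<in>space \<Omega>. fst D \<omega> \<le> enat m \<and> snd D \<omega> = i})"
      using T_le_cover2[OF cp(1), of m] s1 by (intro pt.finite_measure_mono) auto
    also have "\<dots> \<le> (\<Sum>i\<in>{0..N}. measure (P \<theta>) {\<omega>\<in>space \<Omega>. fst D \<omega> \<le> enat m \<and> snd D \<omega> = i})"
      using s1 by (intro measure_UNION_le) auto
    also have "\<dots> \<le> c k" unfolding c_def
    proof (intro sum_mono)
      fix i assume i: "i \<in> {0..N}"
      have "real m \<le> Fbound \<Psi> I \<Theta> N i \<theta> \<epsilon> (\<alpha> k)"
        using nat_floor_le[OF F0] Fle[of i] i unfolding m_def by auto
      thus "measure (P \<theta>) {\<omega>\<in>space \<Omega>. fst D \<omega> \<le> enat m \<and> snd D \<omega> = i} \<le> B i k"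
        using B i D by blast
    qed
    finally show "1 - c k \<le> measure (P \<theta>) {\<omega>\<in>space \<Omega>. T_gt (fst D) (Min ((\<lambda>i. Fbound \<Psi> I \<Theta> N i \<theta> \<epsilon> (\<alpha> k)) ` {0..N})) \<omega>}
       \<and> measure (P \<theta>) {\<omega>\<in>space \<Omega>. T_gt (fst D) (Min ((\<lambda>i. Fbound \<Psi> I \<Theta> N i \<theta> \<epsilon> (\<alpha> k)) ` {0..N})) \<omega>} \<le> 1"
      using pe unfolding F_def by simp
  qed
qed

lemma moment_ge:
  assumes A: "A \<in> sets M" "A = {\<omega>\<in>space M. T_gt T x \<omega>}" and x: "0 \<le> x" and r: "0 \<le> r"
  shows "T_moment M T r \<ge> ennreal (x powr r) * emeasure M A"
proof -
  have "ennreal (x powr r) * emeasure M A = (\<integral>\<^sup>+ \<omega>. ennreal (x powr r) * indicator A \<omega> \<partial>M)"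
    using A(1) by (simp add: nn_integral_cmult_indicator)
  also have "\<dots> \<le> T_moment M T r" unfolding T_moment_def
  proof (rule nn_integral_mono)
    fix \<omega> assume w: "\<omega> \<in> space M"
    show "ennreal (x powr r) * indicator A \<omega> \<le> (case T \<omega> of enat n \<Rightarrow> ennreal (real n powr r) | \<infinity> \<Rightarrow> \<infinity>)"
    proof (cases "\<omega> \<in> A")
      case False thus ?thesis by simp
    next
      case True
      hence tg: "T_gt T x \<omega>" using A(2) by auto
      show ?thesis
      proof (cases "T \<omega>")
        case (enat n)
        hence "x < real n" using tg unfolding T_gt_def by simp
        hence "x powr r \<le> real n powr r" using x r by (intro powr_mono2) auto
        thus ?thesis using True enat by (simp add: ennreal_leI)
      next
        case infinity thus ?thesis by simp
      qed
    qed
  qed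
  finally show ?thesis .
qed

lemma mom_h:
  fixes V :: "nat \<Rightarrow> ennreal" and G :: "nat \<Rightarrow> real"
  assumes G0: "\<forall>k. G k \<ge> 0"
    and ev: "\<forall>e>0. eventually (\<lambda>k. V k \<ge> ennreal ((1-e) * G k powr r)) sequentially"
  shows "\<exists>h. h \<longlonglongrightarrow> 0 \<and> (\<forall>k. V k \<ge> ennreal (G k powr r * (1 + h k)))"
proof -
  define W where "W k = min (V k) (ennreal (G k powr r))" for k
  define w where "w k = enn2real (W k)" for k
  define h where "h k = (if G k > 0 then min 0 (w k / G k powr r - 1) else 0)" for k
  have Wfin: "W k < top" for k unfolding W_def by (simp add: min.strict_coboundedI2)
  have bound: "V k \<ge> ennreal (G k powr r * (1 + h k))" for k
  proof (cases "G k > 0")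
    case True
    hence Gr: "G k powr r > 0" by simp
    have "h k \<le> w k / G k powr r - 1" unfolding h_def using True by simp
    hence "G k powr r * (1 + h k) \<le> G k powr r * (w k / G k powr r)"
      using Gr by (intro mult_left_mono) auto
    also have "\<dots> = w k" using Gr by simp
    finally have "ennreal (G k powr r * (1 + h k)) \<le> ennreal (w k)" by (rule ennreal_leI)
    also have "ennreal (w k) = W k" unfolding w_def using Wfin by simp
    also have "W k \<le> V k" unfolding W_def by simp
    finally show ?thesis .
  next
    case False
    hence "G k = 0" using G0 by (metis less_eq_real_def)
    thus ?thesis by simp
  qed
  have "h \<longlonglongrightarrow> 0"
    unfolding tendsto_iff
  proof (intro allI impI)
    fix e :: real assume e: "e > 0"
    have "eventually (\<lambda>k. V k \<ge> ennreal ((1-e/2) * G k powr r)) sequentially" using ev e by simp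
    thus "eventually (\<lambda>k. dist (h k) 0 < e) sequentially"
    proof eventually_elim
      case (elim k)
      show ?case
      proof (cases "G k > 0")
        case False thus ?thesis unfolding h_def using e by simp
      next
        case True
        hence Gr: "G k powr r > 0" by simp
        have "ennreal ((1-e/2) * G k powr r) \<le> ennreal (G k powr r)"
          using Gr e by (intro ennreal_leI) (simp add: mult_le_cancel_right1)
        hence "ennreal ((1-e/2) * G k powr r) \<le> W k" unfolding W_def using elim by simp
        hence wk: "(1-e/2) * G k powr r \<le> w k"
        proof (cases "(1-e/2) * G k powr r \<ge> 0")
          case True
          assume a: "ennreal ((1-e/2) * G k powr r) \<le> W k"
          have "enn2real (ennreal ((1-e/2) * G k powr r)) \<le> enn2real (W k)"
            using a Wfin by (intro enn2real_mono) auto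
          thus ?thesis unfolding w_def using True by simp
        next
          case False thus ?thesis unfolding w_def by (smt (verit) enn2real_nonneg)
        qed
        have "w k / G k powr r \<ge> 1 - e/2" using wk Gr by (simp add: le_divide_eq)
        hence "h k \<ge> - e/2" "h k \<le> 0" unfolding h_def using True e by auto
        thus ?thesis using e by (simp add: dist_real_def abs_if)
      qed
    qed
  qed
  thus ?thesis using bound by blast
qed

lemma mom_generic:
  fixes G :: "nat \<Rightarrow> real" and Ge :: "real \<Rightarrow> nat \<Rightarrow> real"
  assumes G0: "\<forall>k. 0 \<le> G k" and Ge0: "\<forall>\<epsilon> k. 0 < \<epsilon> \<longrightarrow> \<epsilon> < 1 \<longrightarrow> 0 \<le> Ge \<epsilon> k"
    and ratio: "\<forall>s. 0 < s \<and> s < 1 \<longrightarrow> (\<exists>\<epsilon>. 0 < \<epsilon> \<and> \<epsilon> < 1 \<and> eventually (\<lambda>k. Ge \<epsilon> k \<ge> s * G k) sequentially)"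
    and p1: "\<forall>\<epsilon>. 0 < \<epsilon> \<and> \<epsilon> < 1 \<longrightarrow>
        (\<lambda>k. INF D\<in>C k. measure M {\<omega>\<in>space \<Omega>. T_gt (fst D) (Ge \<epsilon> k) \<omega>}) \<longlonglongrightarrow> 1"
    and mom: "\<forall>\<epsilon> k D. 0 < \<epsilon> \<longrightarrow> \<epsilon> < 1 \<longrightarrow> D \<in> C k \<longrightarrow>
        T_moment M (fst D) r \<ge> ennreal (Ge \<epsilon> k powr r) * ennreal (measure M {\<omega>\<in>space \<Omega>. T_gt (fst D) (Ge \<epsilon> k) \<omega>})"
    and r: "r \<ge> 1"
  shows "\<exists>h::nat \<Rightarrow> real. h \<longlonglongrightarrow> 0 \<and>
     (\<forall>k. (INF D\<in>C k. T_moment M (fst D) r) \<ge> ennreal (G k powr r * (1 + h k)))"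
proof (rule mom_h[OF G0])
  show "\<forall>e>0. eventually (\<lambda>k. (INF D\<in>C k. T_moment M (fst D) r) \<ge> ennreal ((1-e) * G k powr r)) sequentially"
  proof (intro allI impI)
    fix e :: real assume e: "e > 0"
    show "eventually (\<lambda>k. (INF D\<in>C k. T_moment M (fst D) r) \<ge> ennreal ((1-e) * G k powr r)) sequentially"
    proof (cases "e < 1")
      case False
      hence "(1-e) * G k powr r \<le> 0" for k by (simp add: mult_nonpos_nonneg)
      hence "ennreal ((1-e) * G k powr r) = 0" for k by (rule ennreal_neg)
      thus ?thesis by simp
    next
      case True
      define s where "s = (1-e) powr (1/(r+1))"
      have s0: "s > 0" unfolding s_def using True by simp
      have s1: "s < 1"
      proof -
        have "(1-e) powr (1/(r+1)) < 1 powr (1/(r+1))"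
          using True e r by (intro powr_less_mono2) auto
        thus ?thesis unfolding s_def by simp
      qed
      have ss: "s powr r * s = 1 - e"
      proof -
        have "s powr r * s = s powr (r + 1)" using s0 by (simp add: powr_add)
        also have "\<dots> = (1-e) powr ((1/(r+1)) * (r+1))" unfolding s_def by (simp add: powr_powr)
        also have "\<dots> = 1 - e" using r True by simp
        finally show ?thesis .
      qed
      obtain \<epsilon> where eps: "0 < \<epsilon>" "\<epsilon> < 1" and evr: "eventually (\<lambda>k. Ge \<epsilon> k \<ge> s * G k) sequentially"
        using ratio s0 s1 by blast
      define q where "q k = (INF D\<in>C k. measure M {\<omega>\<in>space \<Omega>. T_gt (fst D) (Ge \<epsilon> k) \<omega>})" for k
      have "q \<longlonglongrightarrow> 1" unfolding q_def using p1 eps by blast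
      hence evq: "eventually (\<lambda>k. q k > s) sequentially" using s1 by (rule order_tendstoD(1))
      show ?thesis using evr evq
      proof eventually_elim
        case (elim k)
        have Gek: "0 \<le> Ge \<epsilon> k" using Ge0 eps by blast
        have Gpr: "Ge \<epsilon> k powr r \<ge> (s * G k) powr r"
          using elim(1) s0 G0 r by (intro powr_mono2) auto
        have key: "(1-e) * G k powr r \<le> Ge \<epsilon> k powr r * q k"
        proof -
          have "(s * G k) powr r * s = (s powr r * s) * G k powr r"
            by (simp add: powr_mult algebra_simps)
          hence "(1-e) * G k powr r = (s * G k) powr r * s" using ss by simp
          also have "\<dots> \<le> Ge \<epsilon> k powr r * q k"
            using Gpr elim(2) s0 by (intro mult_mono) auto
          finally show ?thesis .
        qed
        show ?case
        proof (rule INF_greatest)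
          fix D assume D: "D \<in> C k"
          have bdd: "bdd_below ((\<lambda>D. measure M {\<omega>\<in>space \<Omega>. T_gt (fst D) (Ge \<epsilon> k) \<omega>}) ` C k)"
            by (intro bdd_belowI2[of _ 0]) simp
          have qle: "q k \<le> measure M {\<omega>\<in>space \<Omega>. T_gt (fst D) (Ge \<epsilon> k) \<omega>}"
            unfolding q_def using bdd D by (rule cINF_lower)
          have "ennreal ((1-e) * G k powr r) \<le> ennreal (Ge \<epsilon> k powr r * q k)"
            using key by (rule ennreal_leI)
          also have "\<dots> = ennreal (Ge \<epsilon> k powr r) * ennreal (q k)"
            using elim(2) s0 by (intro ennreal_mult) auto
          also have "\<dots> \<le> ennreal (Ge \<epsilon> k powr r) * ennreal (measure M {\<omega>\<in>space \<Omega>. T_gt (fst D) (Ge \<epsilon> k) \<omega>})"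
            using qle by (intro mult_left_mono ennreal_leI) auto
          also have "\<dots> \<le> T_moment M (fst D) r" using mom eps D by blast
          finally show "ennreal ((1-e) * G k powr r) \<le> T_moment M (fst D) r" .
        qed
      qed
    qed
  qed
qed

lemma Psi_ratio:
  assumes s: "s < 1"
  shows "\<exists>\<epsilon>. 0 < \<epsilon> \<and> \<epsilon> < 1 \<and> (\<forall>t. filterlim t at_top sequentially \<longrightarrow>
           eventually (\<lambda>k. \<Psi> ((1-\<epsilon>) * t k) \<ge> s * \<Psi> (t k)) sequentially)"
proof -
  obtain g where g1: "\<forall>\<^sub>F \<delta> in at 1. ((\<lambda>t. \<Psi> (\<delta> * t) / \<Psi> t) \<longlongrightarrow> g \<delta>) at_top"
    and g2: "(g \<longlongrightarrow> 1) (at 1)" using Psi_reg by blast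
  have e1: "\<forall>\<^sub>F \<delta> in at 1. g \<delta> > s" using order_tendstoD(1)[OF g2 s] .
  have "\<forall>\<^sub>F \<delta> in at 1. ((\<lambda>t. \<Psi> (\<delta> * t) / \<Psi> t) \<longlongrightarrow> g \<delta>) at_top \<and> g \<delta> > s"
    using g1 e1 by eventually_elim auto
  hence a1: "\<forall>\<^sub>F \<delta> in at_left 1. ((\<lambda>t. \<Psi> (\<delta> * t) / \<Psi> t) \<longlongrightarrow> g \<delta>) at_top \<and> g \<delta> > s"
    by (rule filter_leD[OF at_le, rotated]) simp
  have a2: "\<forall>\<^sub>F \<delta> in at_left (1::real). \<delta> \<in> {0<..<1}" by (rule eventually_at_left_real) simp
  have "\<forall>\<^sub>F \<delta> in at_left (1::real). ((\<lambda>t. \<Psi> (\<delta> * t) / \<Psi> t) \<longlongrightarrow> g \<delta>) at_top \<and> g \<delta> > s \<and> \<delta> \<in> {0<..<1}"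
    using a1 a2 by eventually_elim auto
  moreover have "at_left (1::real) \<noteq> bot" by simp
  ultimately obtain \<delta> where d: "((\<lambda>t. \<Psi> (\<delta> * t) / \<Psi> t) \<longlongrightarrow> g \<delta>) at_top" "g \<delta> > s" "\<delta> \<in> {0<..<1}"
    using eventually_happens' by blast
  have main: "eventually (\<lambda>k. \<Psi> ((1-(1-\<delta>)) * t k) \<ge> s * \<Psi> (t k)) sequentially"
    if t: "filterlim t at_top sequentially" for t
  proof -
    have "\<forall>\<^sub>F y in at_top. \<Psi> (\<delta> * y) / \<Psi> y > s" by (rule order_tendstoD(1)[OF d(1) d(2)])
    moreover have "\<forall>\<^sub>F y in at_top. \<Psi> y > 0" using Psi_lim unfolding filterlim_at_top_dense by blast
    ultimately have "\<forall>\<^sub>F y in at_top. \<Psi> (\<delta> * y) \<ge> s * \<Psi> y"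
      by eventually_elim (simp add: pos_less_divide_eq less_imp_le)
    hence "eventually (\<lambda>k. \<Psi> (\<delta> * t k) \<ge> s * \<Psi> (t k)) sequentially"
      using t unfolding filterlim_iff by blast
    thus ?thesis by simp
  qed
  show ?thesis using d(3) main by (intro exI[of _ "1 - \<delta>"]) auto
qed

lemma Max_lim:
  assumes i: "i \<le> N" and J: "\<forall>j\<in>{0..N}-{i}. Ij I \<Theta> j \<theta> > 0"
  shows "filterlim (\<lambda>k. Max ((\<lambda>j. \<bar>ln (\<alpha> k j i)\<bar> / Ij I \<Theta> j \<theta>) ` ({0..N}-{i}))) at_top sequentially"
proof -
  obtain j0 where j0: "j0 \<in> {0..N}-{i}" using J_ne[OF i] by blast
  have c: "Ij I \<Theta> j0 \<theta> > 0" using J j0 by auto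
  have neg: "filterlim (\<lambda>k. - ln (\<alpha> k j0 i)) at_top sequentially"
    using ln_alpha_lim[of j0 i] j0 i unfolding filterlim_uminus_at_bot by auto
  have "filterlim (\<lambda>k. (1 / Ij I \<Theta> j0 \<theta>) * (- ln (\<alpha> k j0 i))) at_top sequentially"
    using c by (intro filterlim_tendsto_pos_mult_at_top[OF tendsto_const _ neg]) auto
  moreover have "(1 / Ij I \<Theta> j0 \<theta>) * (- ln (\<alpha> k j0 i)) = \<bar>ln (\<alpha> k j0 i)\<bar> / Ij I \<Theta> j0 \<theta>" for k
    using abs_ln_alpha[of j0 i k] j0 i by simp
  ultimately have r: "filterlim (\<lambda>k. \<bar>ln (\<alpha> k j0 i)\<bar> / Ij I \<Theta> j0 \<theta>) at_top sequentially" by simp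
  show ?thesis
  proof (rule filterlim_at_top_mono[OF r])
    show "\<forall>\<^sub>F k in sequentially. \<bar>ln (\<alpha> k j0 i)\<bar> / Ij I \<Theta> j0 \<theta>
        \<le> Max ((\<lambda>j. \<bar>ln (\<alpha> k j i)\<bar> / Ij I \<Theta> j \<theta>) ` ({0..N}-{i}))"
      using j0 by (intro always_eventually allI Max_ge) auto
  qed
qed

lemma Fbound_eq: "Fbound \<Psi> I \<Theta> N i \<theta> \<epsilon> a = \<Psi> ((1-\<epsilon>) * Max ((\<lambda>j. \<bar>ln (a j i)\<bar> / Ij I \<Theta> j \<theta>) ` ({0..N}-{i})))"
  unfolding Fbound_def by simp

lemma moment_test:
  assumes th: "\<theta> \<in> \<Theta>all" and D: "D \<in> test_class \<Omega> S X N \<Theta> P a" and x: "0 \<le> x" and r: "0 \<le> r"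
  shows "T_moment (P \<theta>) (fst D) r \<ge> ennreal (x powr r) * ennreal (measure (P \<theta>) {\<omega>\<in>space \<Omega>. T_gt (fst D) x \<omega>})"
proof -
  note pf = Pth_facts[OF th]
  interpret pt: prob_space "P \<theta>" using pf by blast
  note cp = class_props[OF D]
  have A: "{\<omega>\<in>space \<Omega>. T_gt (fst D) x \<omega>} \<in> sets (P \<theta>)" using prob_T_gt(2)[OF th cp(1) x] pf by auto
  have "T_moment (P \<theta>) (fst D) r \<ge> ennreal (x powr r) * emeasure (P \<theta>) {\<omega>\<in>space \<Omega>. T_gt (fst D) x \<omega>}"
    using A pf x r by (intro moment_ge) auto
  thus ?thesis using A by (simp add: pt.emeasure_eq_measure)
qed

lemma moment_i:
  assumes i: "i \<le> N" and th: "\<theta> \<in> \<Theta> i" and r: "r \<ge> 1"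
  shows "\<exists>h::nat \<Rightarrow> real. h \<longlonglongrightarrow> 0 \<and>
               (\<forall>k. (INF D\<in>test_class \<Omega> S X N \<Theta> P (\<alpha> k). T_moment (P \<theta>) (fst D) r)
                      \<ge> ennreal (Fbound \<Psi> I \<Theta> N i \<theta> 0 (\<alpha> k) powr r * (1 + h k)))"
proof (rule mom_generic[where Ge = "\<lambda>\<epsilon> k. Fbound \<Psi> I \<Theta> N i \<theta> \<epsilon> (\<alpha> k)"])
  have tha: "\<theta> \<in> \<Theta>all" using Theta_sub[OF i] th by auto
  have Jc: "\<forall>j\<in>{0..N}-{i}. Ij I \<Theta> j \<theta> > 0"
  proof
    fix j assume j: "j \<in> {0..N}-{i}"
    have "Min ((\<lambda>j. Ij I \<Theta> j \<theta>) ` ({0..N} - {i})) > 0" using sep1 i th by auto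
    thus "Ij I \<Theta> j \<theta> > 0" using j J_ne[OF i] by (subst (asm) Min_gr_iff) auto
  qed
  show "\<forall>k. 0 \<le> Fbound \<Psi> I \<Theta> N i \<theta> 0 (\<alpha> k)" using Fbound_nonneg[OF i Jc] by simp
  show "\<forall>\<epsilon> k. 0 < \<epsilon> \<longrightarrow> \<epsilon> < 1 \<longrightarrow> 0 \<le> Fbound \<Psi> I \<Theta> N i \<theta> \<epsilon> (\<alpha> k)" using Fbound_nonneg[OF i Jc] by simp
  show "\<forall>s. 0 < s \<and> s < 1 \<longrightarrow> (\<exists>\<epsilon>. 0 < \<epsilon> \<and> \<epsilon> < 1 \<and>
     eventually (\<lambda>k. Fbound \<Psi> I \<Theta> N i \<theta> \<epsilon> (\<alpha> k) \<ge> s * Fbound \<Psi> I \<Theta> N i \<theta> 0 (\<alpha> k)) sequentially)"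
  proof (intro allI impI)
    fix s :: real assume s: "0 < s \<and> s < 1"
    obtain \<epsilon> where e: "0 < \<epsilon>" "\<epsilon> < 1" and ev: "\<forall>t. filterlim t at_top sequentially \<longrightarrow>
           eventually (\<lambda>k. \<Psi> ((1-\<epsilon>) * t k) \<ge> s * \<Psi> (t k)) sequentially"
      using Psi_ratio[of s] s by blast
    have "eventually (\<lambda>k. Fbound \<Psi> I \<Theta> N i \<theta> \<epsilon> (\<alpha> k) \<ge> s * Fbound \<Psi> I \<Theta> N i \<theta> 0 (\<alpha> k)) sequentially"
      using ev Max_lim[OF i Jc] unfolding Fbound_eq by simp
    thus "\<exists>\<epsilon>. 0 < \<epsilon> \<and> \<epsilon> < 1 \<and>
     eventually (\<lambda>k. Fbound \<Psi> I \<Theta> N i \<theta> \<epsilon> (\<alpha> k) \<ge> s * Fbound \<Psi> I \<Theta> N i \<theta> 0 (\<alpha> k)) sequentially"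
      using e by blast
  qed
  show "\<forall>\<epsilon>. 0 < \<epsilon> \<and> \<epsilon> < 1 \<longrightarrow> (\<lambda>k. INF D\<in>test_class \<Omega> S X N \<Theta> P (\<alpha> k).
           measure (P \<theta>) {\<omega>\<in>space \<Omega>. T_gt (fst D) (Fbound \<Psi> I \<Theta> N i \<theta> \<epsilon> (\<alpha> k)) \<omega>}) \<longlonglongrightarrow> 1"
    using part1_i[OF i th] by blast
  show "\<forall>\<epsilon> k D. 0 < \<epsilon> \<longrightarrow> \<epsilon> < 1 \<longrightarrow> D \<in> test_class \<Omega> S X N \<Theta> P (\<alpha> k) \<longrightarrow>
        T_moment (P \<theta>) (fst D) r \<ge> ennreal (Fbound \<Psi> I \<Theta> N i \<theta> \<epsilon> (\<alpha> k) powr r)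
          * ennreal (measure (P \<theta>) {\<omega>\<in>space \<Omega>. T_gt (fst D) (Fbound \<Psi> I \<Theta> N i \<theta> \<epsilon> (\<alpha> k)) \<omega>})"
    using moment_test[OF tha] Fbound_nonneg[OF i Jc] r by simp
qed (rule r)

lemma moment_in:
  assumes th: "\<theta> \<in> \<Theta>in" and r: "r \<ge> 1"
  shows "\<exists>h::nat \<Rightarrow> real. h \<longlonglongrightarrow> 0 \<and>
               (\<forall>k. (INF D\<in>test_class \<Omega> S X N \<Theta> P (\<alpha> k). T_moment (P \<theta>) (fst D) r)
                      \<ge> ennreal (Min ((\<lambda>i. Fbound \<Psi> I \<Theta> N i \<theta> 0 (\<alpha> k)) ` {0..N}) powr r * (1 + h k)))"
proof (rule mom_generic[where Ge = "\<lambda>\<epsilon> k. Min ((\<lambda>i. Fbound \<Psi> I \<Theta> N i \<theta> \<epsilon> (\<alpha> k)) ` {0..N})"])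
  have tha: "\<theta> \<in> \<Theta>all" using th unfolding Theta_all_def by auto
  have Jc: "\<forall>j\<in>{0..N}-{i}. Ij I \<Theta> j \<theta> > 0" for i
  proof
    fix j assume j: "j \<in> {0..N}-{i}"
    have "Min ((\<lambda>i. Ij I \<Theta> i \<theta>) ` {0..N}) > 0" using sep2 th by auto
    thus "Ij I \<Theta> j \<theta> > 0" using j by (subst (asm) Min_gr_iff) auto
  qed
  have Mnn: "0 \<le> Min ((\<lambda>i. Fbound \<Psi> I \<Theta> N i \<theta> \<epsilon> (\<alpha> k)) ` {0..N})" if "\<epsilon> \<le> 1" for \<epsilon> k
    using Fbound_nonneg[OF _ Jc that] by (subst Min_ge_iff) auto
  show "\<forall>k. 0 \<le> Min ((\<lambda>i. Fbound \<Psi> I \<Theta> N i \<theta> 0 (\<alpha> k)) ` {0..N})" using Mnn by simp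
  show "\<forall>\<epsilon> k. 0 < \<epsilon> \<longrightarrow> \<epsilon> < 1 \<longrightarrow> 0 \<le> Min ((\<lambda>i. Fbound \<Psi> I \<Theta> N i \<theta> \<epsilon> (\<alpha> k)) ` {0..N})"
    using Mnn by simp
  show "\<forall>s. 0 < s \<and> s < 1 \<longrightarrow> (\<exists>\<epsilon>. 0 < \<epsilon> \<and> \<epsilon> < 1 \<and>
     eventually (\<lambda>k. Min ((\<lambda>i. Fbound \<Psi> I \<Theta> N i \<theta> \<epsilon> (\<alpha> k)) ` {0..N})
         \<ge> s * Min ((\<lambda>i. Fbound \<Psi> I \<Theta> N i \<theta> 0 (\<alpha> k)) ` {0..N})) sequentially)"
  proof (intro allI impI)
    fix s :: real assume s: "0 < s \<and> s < 1"
    obtain \<epsilon> where e: "0 < \<epsilon>" "\<epsilon> < 1" and ev: "\<forall>t. filterlim t at_top sequentially \<longrightarrow>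
           eventually (\<lambda>k. \<Psi> ((1-\<epsilon>) * t k) \<ge> s * \<Psi> (t k)) sequentially"
      using Psi_ratio[of s] s by blast
    have "\<forall>i\<in>{0..N}. eventually (\<lambda>k. Fbound \<Psi> I \<Theta> N i \<theta> \<epsilon> (\<alpha> k) \<ge> s * Fbound \<Psi> I \<Theta> N i \<theta> 0 (\<alpha> k)) sequentially"
      using ev Max_lim[OF _ Jc] unfolding Fbound_eq by simp
    hence "eventually (\<lambda>k. \<forall>i\<in>{0..N}. Fbound \<Psi> I \<Theta> N i \<theta> \<epsilon> (\<alpha> k) \<ge> s * Fbound \<Psi> I \<Theta> N i \<theta> 0 (\<alpha> k)) sequentially"
      by (subst eventually_ball_finite_distrib) auto
    hence "eventually (\<lambda>k. Min ((\<lambda>i. Fbound \<Psi> I \<Theta> N i \<theta> \<epsilon> (\<alpha> k)) ` {0..N})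
         \<ge> s * Min ((\<lambda>i. Fbound \<Psi> I \<Theta> N i \<theta> 0 (\<alpha> k)) ` {0..N})) sequentially"
    proof eventually_elim
      case (elim k)
      show ?case
      proof (subst Min_ge_iff, simp, simp, intro ballI)
        fix x assume "x \<in> (\<lambda>i. Fbound \<Psi> I \<Theta> N i \<theta> \<epsilon> (\<alpha> k)) ` {0..N}"
        then obtain i where i: "i \<in> {0..N}" "x = Fbound \<Psi> I \<Theta> N i \<theta> \<epsilon> (\<alpha> k)" by blast
        have "Min ((\<lambda>i. Fbound \<Psi> I \<Theta> N i \<theta> 0 (\<alpha> k)) ` {0..N}) \<le> Fbound \<Psi> I \<Theta> N i \<theta> 0 (\<alpha> k)"
          using i by (intro Min_le) auto
        hence "s * Min ((\<lambda>i. Fbound \<Psi> I \<Theta> N i \<theta> 0 (\<alpha> k)) ` {0..N}) \<le> s * Fbound \<Psi> I \<Theta> N i \<theta> 0 (\<alpha> k)"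
          using s by (intro mult_left_mono) auto
        also have "\<dots> \<le> x" using elim i by auto
        finally show "s * Min ((\<lambda>i. Fbound \<Psi> I \<Theta> N i \<theta> 0 (\<alpha> k)) ` {0..N}) \<le> x" .
      qed
    qed
    thus "\<exists>\<epsilon>. 0 < \<epsilon> \<and> \<epsilon> < 1 \<and>
     eventually (\<lambda>k. Min ((\<lambda>i. Fbound \<Psi> I \<Theta> N i \<theta> \<epsilon> (\<alpha> k)) ` {0..N})
         \<ge> s * Min ((\<lambda>i. Fbound \<Psi> I \<Theta> N i \<theta> 0 (\<alpha> k)) ` {0..N})) sequentially"
      using e by blast
  qed
  show "\<forall>\<epsilon>. 0 < \<epsilon> \<and> \<epsilon> < 1 \<longrightarrow> (\<lambda>k. INF D\<in>test_class \<Omega> S X N \<Theta> P (\<alpha> k).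
           measure (P \<theta>) {\<omega>\<in>space \<Omega>. T_gt (fst D) (Min ((\<lambda>i. Fbound \<Psi> I \<Theta> N i \<theta> \<epsilon> (\<alpha> k)) ` {0..N})) \<omega>}) \<longlonglongrightarrow> 1"
    using part1_in[OF th] by blast
  show "\<forall>\<epsilon> k D. 0 < \<epsilon> \<longrightarrow> \<epsilon> < 1 \<longrightarrow> D \<in> test_class \<Omega> S X N \<Theta> P (\<alpha> k) \<longrightarrow>
        T_moment (P \<theta>) (fst D) r \<ge> ennreal (Min ((\<lambda>i. Fbound \<Psi> I \<Theta> N i \<theta> \<epsilon> (\<alpha> k)) ` {0..N}) powr r)
          * ennreal (measure (P \<theta>) {\<omega>\<in>space \<Omega>. T_gt (fst D) (Min ((\<lambda>i. Fbound \<Psi> I \<Theta> N i \<theta> \<epsilon> (\<alpha> k)) ` {0..N})) \<omega>})"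
    using moment_test[OF tha] Mnn r by simp
qed (rule r)

end


theorem theorem1:
  fixes \<Omega> :: "'w measure" and S :: "'x measure" and X :: "nat \<Rightarrow> 'w \<Rightarrow> 'x"
    and P :: "'p::euclidean_space \<Rightarrow> 'w measure"
    and N :: nat and \<Theta> :: "nat \<Rightarrow> 'p set" and \<Theta>in :: "'p set"
    and \<mu> :: "nat \<Rightarrow> (nat \<Rightarrow> 'x) measure" and p :: "'p \<Rightarrow> nat \<Rightarrow> (nat \<Rightarrow> 'x) \<Rightarrow> real"
    and \<psi> :: "real \<Rightarrow> real" and I :: "'p \<Rightarrow> 'p \<Rightarrow> real"
    and \<alpha> :: "nat \<Rightarrow> nat \<Rightarrow> nat \<Rightarrow> real" and c :: "nat \<Rightarrow> nat \<Rightarrow> real"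
  defines "\<Theta>all \<equiv> \<Theta>in \<union> (\<Union>i\<in>{0..N}. \<Theta> i)"
    and "\<Psi> \<equiv> inv_into {0..} \<psi>"
  assumes N_ge: "N \<ge> 1"
    and Theta_disj: "disjoint_family_on \<Theta> {0..N}"
    and Theta_in_disj: "\<forall>i\<le>N. \<Theta>in \<inter> \<Theta> i = {}"
    and Theta_ne: "\<forall>i\<le>N. \<Theta> i \<noteq> {}"
    and X_meas: "\<forall>i. X i \<in> measurable \<Omega> S"
    and P_prob: "\<forall>\<theta>\<in>\<Theta>all. prob_space (P \<theta>) \<and> sets (P \<theta>) = sets \<Omega>"
    and mu_sf: "\<forall>n\<ge>1. sets (\<mu> n) = sets (PiM {1..n} (\<lambda>_. S)) \<and> sigma_finite_measure (\<mu> n)"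
    and dens: "\<forall>\<theta>\<in>\<Theta>all. \<forall>n\<ge>1. (\<forall>x. 0 \<le> p \<theta> n x)
                 \<and> p \<theta> n \<in> borel_measurable (PiM {1..n} (\<lambda>_. S))
                 \<and> distr (P \<theta>) (PiM {1..n} (\<lambda>_. S)) (obs_vec X n)
                     = density (\<mu> n) (\<lambda>x. ennreal (p \<theta> n x))"
    and mut_ac: "\<forall>\<theta>\<in>\<Theta>all. \<forall>\<theta>'\<in>\<Theta>all. \<forall>n\<ge>1.
                 absolutely_continuous (distr (P \<theta>) (PiM {1..n} (\<lambda>_. S)) (obs_vec X n))
                                       (distr (P \<theta>') (PiM {1..n} (\<lambda>_. S)) (obs_vec X n))"
    and psi_mono: "strict_mono_on {0..} \<psi>"
    and psi_bij: "bij_betw \<psi> {0..} {0..}"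
    and psi_lim: "filterlim \<psi> at_top at_top"
    and Psi_lim: "filterlim \<Psi> at_top at_top"
    and Psi_reg: "\<exists>g. (\<forall>\<^sub>F \<delta> in at 1. ((\<lambda>t. \<Psi> (\<delta> * t) / \<Psi> t) \<longlongrightarrow> g \<delta>) at_top)
                      \<and> (g \<longlongrightarrow> 1) (at 1)"
    and I_pos: "\<forall>\<theta>\<in>\<Theta>all. \<forall>\<theta>'\<in>\<Theta>all. \<theta> \<noteq> \<theta>' \<longrightarrow> 0 < I \<theta> \<theta>'"
    and I_cont: "continuous_on {(\<theta>, \<theta>'). \<theta> \<in> \<Theta>all \<and> \<theta>' \<in> \<Theta>all \<and> \<theta> \<noteq> \<theta>'}
                   (\<lambda>(\<theta>, \<theta>'). I \<theta> \<theta>')"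
    and sep1: "\<forall>i\<le>N. \<forall>\<theta>\<in>\<Theta> i. 0 < Min ((\<lambda>j. Ij I \<Theta> j \<theta>) ` ({0..N} - {i}))"
    and sep2: "\<forall>\<theta>\<in>\<Theta>in. 0 < Min ((\<lambda>i. Ij I \<Theta> i \<theta>) ` {0..N})"
    and right_tail: "\<forall>\<epsilon>>0. \<forall>\<theta>\<in>\<Theta>all. \<forall>\<theta>'\<in>\<Theta>all. \<theta> \<noteq> \<theta>' \<longrightarrow>
                 ((\<lambda>L::nat. measure (P \<theta>)
                     {\<omega>\<in>space \<Omega>. (1 / \<psi> (real L)) * Max ((\<lambda>n. llr p X \<theta> \<theta>' n \<omega>) ` {1..L})
                                   > (1 + \<epsilon>) * I \<theta> \<theta>'}) \<longlonglongrightarrow> 0)"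
    and alpha_range: "\<forall>k i j. i \<le> N \<and> j \<le> N \<and> i \<noteq> j \<longrightarrow> 0 < \<alpha> k i j \<and> \<alpha> k i j < 1"
    and alpha_max_lim: "(\<lambda>k. alpha_max N (\<alpha> k)) \<longlonglongrightarrow> 0"
    and alpha_ratio: "\<forall>i j. i \<le> N \<and> j \<le> N \<and> i \<noteq> j \<longrightarrow> 0 < c i j \<and> c i j \<le> 1 \<and>
                 ((\<lambda>k. \<bar>ln (\<alpha> k i j)\<bar> / \<bar>ln (alpha_max N (\<alpha> k))\<bar>) \<longlonglongrightarrow> c i j)"
  shows "(\<forall>\<epsilon>. 0 < \<epsilon> \<and> \<epsilon> < 1 \<longrightarrow>
            (\<forall>i\<le>N. \<forall>\<theta>\<in>\<Theta> i.
               (\<lambda>k. INF D\<in>test_class \<Omega> S X N \<Theta> P (\<alpha> k).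
                      measure (P \<theta>) {\<omega>\<in>space \<Omega>. T_gt (fst D) (Fbound \<Psi> I \<Theta> N i \<theta> \<epsilon> (\<alpha> k)) \<omega>})
                 \<longlonglongrightarrow> 1)
          \<and> (\<forall>\<theta>\<in>\<Theta>in.
               (\<lambda>k. INF D\<in>test_class \<Omega> S X N \<Theta> P (\<alpha> k).
                      measure (P \<theta>) {\<omega>\<in>space \<Omega>.
                         T_gt (fst D) (Min ((\<lambda>i. Fbound \<Psi> I \<Theta> N i \<theta> \<epsilon> (\<alpha> k)) ` {0..N})) \<omega>})
                 \<longlonglongrightarrow> 1))
       \<and> (\<forall>r::real. r \<ge> 1 \<longrightarrow>
            (\<forall>i\<le>N. \<forall>\<theta>\<in>\<Theta> i. \<exists>h::nat \<Rightarrow> real. h \<longlonglongrightarrow> 0 \<and>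
               (\<forall>k. (INF D\<in>test_class \<Omega> S X N \<Theta> P (\<alpha> k). T_moment (P \<theta>) (fst D) r)
                      \<ge> ennreal (Fbound \<Psi> I \<Theta> N i \<theta> 0 (\<alpha> k) powr r * (1 + h k))))
          \<and> (\<forall>\<theta>\<in>\<Theta>in. \<exists>h::nat \<Rightarrow> real. h \<longlonglongrightarrow> 0 \<and>
               (\<forall>k. (INF D\<in>test_class \<Omega> S X N \<Theta> P (\<alpha> k). T_moment (P \<theta>) (fst D) r)
                      \<ge> ennreal (Min ((\<lambda>i. Fbound \<Psi> I \<Theta> N i \<theta> 0 (\<alpha> k)) ` {0..N}) powr r
                                 * (1 + h k)))))"
  proof -
  interpret setting2 \<Omega> S X P N \<Theta> \<Theta>in \<mu> p \<psi> I \<alpha> \<Theta>all \<Psi>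
  proof (unfold_locales)
    show "\<Theta>all = \<Theta>in \<union> (\<Union>i\<in>{0..N}. \<Theta> i)" using \<open>\<Theta>all \<equiv> \<Theta>in \<union> (\<Union>i\<in>{0..N}. \<Theta> i)\<close> by simp
    show "\<Psi> = inv_into {0..} \<psi>" using \<open>\<Psi> \<equiv> inv_into {0..} \<psi>\<close> by simp
  qed (use assms in auto)
  show ?thesis using part1_i part1_in moment_i moment_in by blast
qed

end
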